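(* Let $v\in\mathbb{C}$. For real $n>0$ with $\mathrm{Re}(n+v)>-1$ define \[ \theta_n(v)=1+n\int_0^1 e^{n(1-z)}z^{n+v}\,dz-\frac{e^n}{2n^{n+v}}\Gamma(n+v+1). \] Then for every integer $R\geq1$, as $n\to\infty$, \[ \theta_n(v)=\rho_0(v)+\frac{\rho_1(v)}{n}+\cdots+\frac{\rho_{R-1}(v)}{n^{R-1}}+O\!\left(\frac{1}{n^R}\right), \] with an implied constant depending only on $R$ and $v$, where \[ \rho_r(v)=\delta_{r,0}-\sum_{m=0}^{2r+1}(-1)^m\binom{v}{2r+1-m}\sum_{k=0}^{m}\frac{(2r+2k)!!}{(-1)^k\,k!}\,\mathcal{A}_{m,k}\!\left(\tfrac13,\tfrac14,\tfrac15,\dots\right). \]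
   Context: For integers $n$ and $k\geq 0$ and a sequence $a_1,a_2,\dots$, the De Moivre polynomial $\mathcal{A}_{n,k}(a_1,a_2,\dots)$ is the coefficient of $x^n$ in $(a_1x+a_2x^2+a_3x^3+\cdots)^k$ (so $\mathcal{A}_{0,0}=1$, $\mathcal{A}_{n,k}=0$ for $n<k$). The double factorial: $n!!=n(n-2)\cdots$ down to $1$ or $2$ for $n\geq1$, with $0!!=(-1)!!=1$. $\binom{v}{j}=v(v-1)\cdots(v-j+1)/j!$ for complex $v$, and $\delta_{r,0}$ is the Kronecker delta. $n^{n+v}=e^{(n+v)\log n}$. For integers $n\geq1$ and $v$ with $n+v\geq 0$, $\theta_n(v)$ coincides with the number defined by $\sum_{j=0}^{n+v-1}\frac{n^j}{j!}+\frac{n^{n+v}}{(n+v)!}\theta_n(v)=\frac{e^n}{2}$. *)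

theory Defs
  imports "HOL-Analysis.Analysis" "HOL-Computational_Algebra.Formal_Power_Series"
    "HOL-Library.Landau_Symbols"
begin

fun dfact :: "nat \<Rightarrow> nat" where
  "dfact 0 = 1"
| "dfact (Suc 0) = 1"
| "dfact (Suc (Suc n)) = Suc (Suc n) * dfact n"

text \<open>De Moivre polynomial: coefficient of x^n in (a_1 x + a_2 x^2 + ...)^k.
  The sequence a is indexed from 1; the value a 0 is ignored.\<close>
definition deMoivre :: "nat \<Rightarrow> nat \<Rightarrow> (nat \<Rightarrow> 'a::comm_ring_1) \<Rightarrow> 'a" where
  "deMoivre n k a = fps_nth ((Abs_fps (\<lambda>j. if j = 0 then 0 else a j)) ^ k) n"

definition theta :: "real \<Rightarrow> complex \<Rightarrow> complex" where
  "theta n v = 1 + of_real n * integral {0..1::real}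
        (\<lambda>z. of_real (exp (n * (1 - z))) * (of_real z) powr (of_real n + v))
     - of_real (exp n) / (2 * exp ((of_real n + v) * of_real (ln n))) * Gamma (of_real n + v + 1)"

definition rho :: "nat \<Rightarrow> complex \<Rightarrow> complex" where
  "rho r v = (if r = 0 then 1 else 0)
     - (\<Sum>m = 0..2*r+1. (-1)^m * (v gchoose (2*r+1-m)) *
          (\<Sum>k = 0..m. of_nat (dfact (2*r+2*k)) / ((-1)^k * of_nat (fact k)) *
                 deMoivre m k (\<lambda>j. 1 / of_nat (j + 2))))"

end

theory Submission
  imports Defs "HOL-Analysis.Analysis" "HOL-Analysis.FPS_Convergence"
begin

lemma dfact_even: "dfact (2*n) = 2^n * fact n"
  by (induction n) (auto simp: mult_2 [symmetric] fact_Suc algebra_simps)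

definition Sfps :: "complex fps" where
  "Sfps = Abs_fps (\<lambda>j. if j = 0 then 0 else 1 / of_nat (j + 2))"

definition Sfps' :: "complex fps" where
  "Sfps' = Abs_fps (\<lambda>j. if j = 0 then 0 else (-1)^j / of_nat (j + 2))"

definition Fq :: "complex fps" where
  "Fq = Abs_fps (\<lambda>j. if j < 3 then 0 else - ((-1)^j) / of_nat j)"

lemma deMoivre_Sfps: "deMoivre m k (\<lambda>j. 1 / of_nat (j + 2)) = fps_nth (Sfps ^ k) m"
  unfolding deMoivre_def Sfps_def by (rule refl)

lemma fps_power_scale:
  fixes a b :: "'a::comm_ring_1 fps"
  assumes "\<And>j. fps_nth b j = c ^ j * fps_nth a j"
  shows "fps_nth (b ^ k) m = c ^ m * fps_nth (a ^ k) m"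
proof (induction k arbitrary: m)
  case 0
  then show ?case by simp
next
  case (Suc k)
  have "fps_nth (b ^ Suc k) m = (\<Sum>i=0..m. fps_nth b i * fps_nth (b ^ k) (m - i))"
    by (simp add: fps_mult_nth)
  also have "\<dots> = (\<Sum>i=0..m. c ^ m * (fps_nth a i * fps_nth (a ^ k) (m - i)))"
  proof (intro sum.cong refl)
    fix i assume "i \<in> {0..m}"
    hence "c ^ m = c ^ i * c ^ (m - i)" by (simp add: power_add [symmetric])
    thus "fps_nth b i * fps_nth (b ^ k) (m - i) = c ^ m * (fps_nth a i * fps_nth (a ^ k) (m - i))"
      using Suc.IH assms by (simp add: algebra_simps)
  qed
  also have "\<dots> = c ^ m * fps_nth (a ^ Suc k) m"
    by (simp add: fps_mult_nth sum_distrib_left)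
  finally show ?case .
qed

lemma Sfps_power_low: "m < k \<Longrightarrow> fps_nth (Sfps ^ k) m = 0"
proof (induction k arbitrary: m)
  case 0 then show ?case by simp
next
  case (Suc k)
  have "fps_nth (Sfps ^ Suc k) m = (\<Sum>i=0..m. fps_nth Sfps i * fps_nth (Sfps ^ k) (m - i))"
    by (simp add: fps_mult_nth)
  also have "\<dots> = 0"
  proof (intro sum.neutral ballI)
    fix i assume "i \<in> {0..m}"
    show "fps_nth Sfps i * fps_nth (Sfps ^ k) (m - i) = 0"
    proof (cases "i = 0")
      case True then show ?thesis by (simp add: Sfps_def)
    next
      case False
      then have "m - i < k" using Suc.prems \<open>i \<in> {0..m}\<close> by auto
      then show ?thesis using Suc.IH by simp
    qed
  qed
  finally show ?case .
qed

lemma Fq_eq: "Fq = - (fps_X ^ 2 * Sfps')"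
proof (rule fps_ext)
  fix i
  show "fps_nth Fq i = fps_nth (- (fps_X ^ 2 * Sfps')) i"
  proof (cases "i < 3")
    case True
    then have "i = 0 \<or> i = 1 \<or> i = 2" by auto
    then show ?thesis by (auto simp: Fq_def Sfps'_def fps_X_power_mult_nth)
  next
    case False
    define j where "j = i - 2"
    have j: "i = j + 2" "j \<noteq> 0" using False by (auto simp: j_def)
    have "(-1::complex) ^ j = (-1) ^ (j+2)" by (simp add: power_add)
    then show ?thesis using j by (simp add: Fq_def Sfps'_def fps_X_power_mult_nth)
  qed
qed

lemma Fq_power_nth:
  "fps_nth (Fq ^ k) (2*k + m) = (-1)^k * (-1)^m * deMoivre m k (\<lambda>j. 1 / of_nat (j + 2))"
proof -
  have e1: "Fq = fps_const (-1) * (fps_X^2 * Sfps')"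
    by (simp add: Fq_eq fps_const_neg [symmetric])
  have "Fq ^ k = fps_const (-1) ^ k * ((fps_X^2) ^ k * Sfps' ^ k)"
    unfolding e1 by (simp only: power_mult_distrib)
  also have "\<dots> = fps_const ((-1) ^ k) * (fps_X ^ (2*k) * Sfps' ^ k)"
    by (simp only: fps_const_power power_mult)
  finally have e2: "Fq ^ k = fps_const ((-1) ^ k) * (fps_X ^ (2*k) * Sfps' ^ k)" .
  have "fps_nth (Fq ^ k) (2*k + m) = (-1)^k * fps_nth (Sfps' ^ k) m"
    unfolding e2 fps_mult_left_const_nth by (simp add: fps_X_power_mult_nth)
  also have "fps_nth (Sfps' ^ k) m = (-1)^m * fps_nth (Sfps ^ k) m"
    by (rule fps_power_scale) (simp add: Sfps_def Sfps'_def)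
  finally show ?thesis unfolding deMoivre_Sfps by (simp only: mult.assoc)
qed

lemma Fq_power_eq: "Fq ^ k = fps_const ((-1) ^ k) * (fps_X ^ (2*k) * Sfps' ^ k)"
proof -
  have e1: "Fq = fps_const (-1) * (fps_X^2 * Sfps')"
    by (simp add: Fq_eq fps_const_neg [symmetric])
  have "Fq ^ k = fps_const (-1) ^ k * ((fps_X^2) ^ k * Sfps' ^ k)"
    unfolding e1 by (simp only: power_mult_distrib)
  also have "\<dots> = fps_const ((-1) ^ k) * (fps_X ^ (2*k) * Sfps' ^ k)"
    by (simp only: fps_const_power power_mult)
  finally show ?thesis .
qed

lemma Fq_power_low: "i < 2*k \<Longrightarrow> fps_nth (Fq ^ k) i = 0"
  unfolding Fq_power_eq fps_mult_left_const_nth by (simp add: fps_X_power_mult_nth)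

definition Hf :: "complex \<Rightarrow> nat \<Rightarrow> complex fps" where
  "Hf v k = Fq ^ k * fps_binomial v"

definition cc :: "complex \<Rightarrow> nat \<Rightarrow> nat \<Rightarrow> complex" where
  "cc v k j = fps_nth (Hf v k) (2*j+1) * fact j * 2^j / fact k"

lemma Hf_nth:
  "fps_nth (Hf v k) (2*k + (2*r + 1)) = (\<Sum>m=0..2*r+1. (-1)^k * (-1)^m *
      deMoivre m k (\<lambda>j. 1 / of_nat (j + 2)) * (v gchoose (2*r+1-m)))"
proof -
  let ?f = "\<lambda>i. fps_nth (Fq ^ k) i * (v gchoose (2*k + (2*r + 1) - i))"
  have "fps_nth (Hf v k) (2*k + (2*r + 1)) = sum ?f {0..2*k + (2*r+1)}"
    by (simp add: Hf_def fps_mult_nth)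
  also have "{0..2*k + (2*r+1)} = {0..<2*k} \<union> {0+2*k..(2*r+1)+2*k}" by auto
  also have "sum ?f \<dots> = sum ?f {0..<2*k} + sum ?f {0+2*k..(2*r+1)+2*k}"
    by (rule sum.union_disjoint) auto
  also have "sum ?f {0..<2*k} = 0"
    by (intro sum.neutral) (auto simp: Fq_power_low)
  also have "sum ?f {0+2*k..(2*r+1)+2*k} = sum (\<lambda>m. ?f (m + 2*k)) {0..2*r+1}"
    by (rule sum.shift_bounds_cl_nat_ivl)
  also have "\<dots> = (\<Sum>m=0..2*r+1. (-1)^k * (-1)^m *
      deMoivre m k (\<lambda>j. 1 / of_nat (j + 2)) * (v gchoose (2*r+1-m)))"
  proof (intro sum.cong refl)
    fix m assume "m \<in> {0..2*r+1}"
    have "fps_nth (Fq ^ k) (m + 2*k) = fps_nth (Fq ^ k) (2*k + m)" by (simp add: add.commute)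
    also have "\<dots> = (-1)^k * (-1)^m * deMoivre m k (\<lambda>j. 1 / of_nat (j + 2))"
      by (rule Fq_power_nth)
    finally show "?f (m + 2*k) = (-1)^k * (-1)^m *
      deMoivre m k (\<lambda>j. 1 / of_nat (j + 2)) * (v gchoose (2*r+1-m))"
      by simp
  qed
  finally show ?thesis by simp
qed

lemma cc_low: "j < k \<Longrightarrow> cc v k j = 0"
proof -
  assume "j < k"
  have "fps_nth (Hf v k) (2*j+1) = 0"
    unfolding Hf_def fps_mult_nth using \<open>j < k\<close>
    by (intro sum.neutral) (auto simp: Fq_power_low)
  thus ?thesis by (simp add: cc_def)
qed

lemma deMoivre_low: "m < k \<Longrightarrow> deMoivre m k (\<lambda>j. 1 / of_nat (j + 2)) = (0::complex)"
  unfolding deMoivre_Sfps by (rule Sfps_power_low)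

lemma rho_eq:
  assumes "2*r+2 \<le> K"
  shows "(if r = 0 then 1 else 0) - (\<Sum>k<K. cc v k (k + r)) = rho r v"
proof -
  define A where "A = (\<lambda>m k. deMoivre m k (\<lambda>j. 1 / of_nat (j + 2)) :: complex)"
  define F where "F = (\<lambda>m k. (-1)^m * (v gchoose (2*r+1-m)) *
      (of_nat (dfact (2*r+2*k)) / ((-1)^k * of_nat (fact k)) * A m k))"
  have cc_eq: "cc v k (k + r) = (\<Sum>m=0..2*r+1. F m k)" for k
  proof -
    have "cc v k (k + r) = fps_nth (Hf v k) (2*k + (2*r + 1)) * fact (k+r) * 2^(k+r) / fact k"
      by (simp add: cc_def algebra_simps)
    also have "\<dots> = (\<Sum>m=0..2*r+1. (-1)^k * (-1)^m * A m k * (v gchoose (2*r+1-m))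
                   * fact (k+r) * 2^(k+r) / fact k)"
      unfolding Hf_nth A_def sum_distrib_right sum_divide_distrib by (rule refl)
    also have "\<dots> = (\<Sum>m=0..2*r+1. F m k)"
    proof (intro sum.cong refl)
      fix m
      have d: "of_nat (dfact (2*r+2*k)) = (2::complex)^(k+r) * fact (k+r)"
        using dfact_even[of "r+k"] by (simp add: algebra_simps)
      have s: "(-1::complex)^k * (-1)^k = 1"
        by (simp add: power_add [symmetric] mult_2 [symmetric])
      show "(-1)^k * (-1)^m * A m k * (v gchoose (2*r+1-m)) * fact (k+r) * 2^(k+r) / fact k = F m k"
        unfolding F_def d using s by (simp add: field_simps)
    qed
    finally show ?thesis .
  qed
  have "(\<Sum>k<K. cc v k (k + r)) = (\<Sum>k<K. \<Sum>m=0..2*r+1. F m k)"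
    by (simp add: cc_eq)
  also have "\<dots> = (\<Sum>m=0..2*r+1. \<Sum>k<K. F m k)"
    by (rule sum.swap)
  also have "\<dots> = (\<Sum>m=0..2*r+1. \<Sum>k=0..m. F m k)"
  proof (rule sum.cong[OF refl])
    fix m assume m: "m \<in> {0..2*r+1}"
    show "(\<Sum>k<K. F m k) = (\<Sum>k=0..m. F m k)"
    proof -
      have "\<forall>i\<in>{..<K} - {0..m}. F m i = 0"
        using deMoivre_low by (auto simp: F_def A_def)
      then show ?thesis by (intro sum.mono_neutral_right) (use m assms in auto)
    qed
  qed
  finally have "(\<Sum>k<K. cc v k (k + r)) = (\<Sum>m=0..2*r+1. \<Sum>k=0..m. F m k)" .
  moreover have "rho r v = (if r = 0 then 1 else 0) - (\<Sum>m=0..2*r+1. \<Sum>k=0..m. F m k)"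
    unfolding rho_def F_def A_def by (simp add: sum_distrib_left)
  ultimately show ?thesis by simp
qed

definition Eg :: "real \<Rightarrow> nat \<Rightarrow> real \<Rightarrow> real" where
  "Eg a j t = exp (-a*t^2) * (\<Sum>i\<le>j. a^i * t^(2*i) / fact i)"

lemma Eg_deriv:
  "(Eg a j has_real_derivative (-2*a*t*exp(-a*t^2)*(a^j*t^(2*j))/fact j)) (at t)"
proof (induction j)
  case 0
  show ?case unfolding Eg_def
    by (auto intro!: derivative_eq_intros)
next
  case (Suc j)
  have eq: "Eg a (Suc j) = (\<lambda>t. Eg a j t + exp (-a*t^2) * (a^(Suc j) * t^(2*j+2)) / fact (Suc j))"
    by (auto simp: Eg_def algebra_simps)
  have h1: "((\<lambda>t. exp(-a*t^2)) has_real_derivative (exp(-a*t^2) * (-2*a*t))) (at t)"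
    by (auto intro!: derivative_eq_intros)
  have h2: "((\<lambda>t. a^(Suc j) * t^(2*j+2)) has_real_derivative (a^(Suc j) * (real (2*j+2) * t^(2*j+1)))) (at t)"
    using DERIV_cmult[OF DERIV_pow[of "2*j+2" t UNIV], of "a^(Suc j)"] by simp
  have d2: "((\<lambda>t. exp (-a*t^2) * (a^(Suc j) * t^(2*j+2)) / fact (Suc j)) has_real_derivative
     ((exp(-a*t^2) * (-2*a*t) * (a^(Suc j) * t^(2*j+2)) + (a^(Suc j) * (real (2*j+2) * t^(2*j+1))) * exp(-a*t^2)) / fact (Suc j))) (at t)"
    by (intro DERIV_cdivide DERIV_mult h1 h2)
  have key: "-2 * a * t * ee * (pp * ss)/fj + (ee * (-2 * a * t) * (a * pp * (t^2 * ss)) + (a * pp) * ((2 * m+2) * (t * ss)) * ee)/((m+1) * fj)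
      = -2 * a * t * ee * (a * pp * (t^2 * ss))/((m+1) * fj)" if "fj > 0" "m \<ge> 0" for fj ee pp ss m :: real
    proof -
    have nz: "(m+1) * fj \<noteq> 0" using that by (simp add: add_pos_nonneg)
    have e: "x / fj = x * (m+1) / ((m+1) * fj)" for x using nz by simp
    show ?thesis unfolding e[of "-2 * a * t * ee * (pp * ss)"] add_divide_distrib[symmetric]
      by (rule arg_cong[where f="\<lambda>x. x / ((m+1) * fj)"]) algebra
  qed
  have r1: "a^(Suc j) = a * a^j" "t^(2*j+2) = t^2 * t^(2*j)" "t^(2*j+1) = t * t^(2*j)"
    "t^(2*Suc j) = t^2 * t^(2*j)" "real (2*j+2) = 2 * real j + 2" "fact (Suc j) = (real j + 1) * fact j"
    by (simp_all add: power_add power2_eq_square fact_Suc algebra_simps)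
  have "-2*a*t*exp(-a*t^2)*(a^j*t^(2*j))/fact j + ((exp(-a*t^2) * (-2*a*t) * (a^(Suc j) * t^(2*j+2)) + (a^(Suc j) * (real (2*j+2) * t^(2*j+1))) * exp(-a*t^2)) / fact (Suc j))
      = -2*a*t*exp(-a*t^2)*(a^(Suc j)*t^(2*(Suc j)))/fact (Suc j)"
    unfolding r1 by (rule key) auto
  then show ?case unfolding eq
    using DERIV_add[OF Suc.IH d2] by simp
qed

lemma exp_partial_le: "x \<ge> 0 \<Longrightarrow> (\<Sum>i<n. x^i / fact i) \<le> exp (x::real)"
proof -
  assume x: "x \<ge> 0"
  obtain t where "\<bar>t\<bar> \<le> \<bar>x\<bar>" "exp x = (\<Sum>m<n. x^m / fact m) + exp t / fact n * x^n"
    using Maclaurin_exp_le by blast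
  moreover have "exp t / fact n * x^n \<ge> 0" using x by simp
  ultimately show ?thesis by linarith
qed

lemma exp_taylor_bound:
  fixes x :: real
  shows "\<bar>exp x - (\<Sum>m<K. x^m / fact m)\<bar> \<le> exp \<bar>x\<bar> * \<bar>x\<bar>^K / fact K"
proof -
  obtain t where t: "\<bar>t\<bar> \<le> \<bar>x\<bar>" "exp x = (\<Sum>m<K. x^m / fact m) + exp t / fact K * x^K"
    using Maclaurin_exp_le by blast
  have "\<bar>exp t / fact K * x^K\<bar> = exp t * \<bar>x\<bar>^K / fact K" by (simp add: abs_mult power_abs)
  also have "\<dots> \<le> exp \<bar>x\<bar> * \<bar>x\<bar>^K / fact K"
    using t(1) by (intro divide_right_mono mult_right_mono) auto
  finally show ?thesis using t(2) by simp
qed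

lemma Eg_bounds:
  assumes "(a::real) \<ge> 0"
  shows "0 \<le> Eg a j t" "Eg a j t \<le> 1"
proof -
  have "(\<Sum>i\<le>j. a^i * t^(2*i) / fact i) = (\<Sum>i<Suc j. (a*t^2)^i / fact i)"
    using lessThan_Suc_atMost by (simp add: power_mult_distrib power_mult)
  also have "\<dots> \<le> exp (a*t^2)" using assms by (intro exp_partial_le) auto
  finally have "exp (-a*t^2) * (\<Sum>i\<le>j. a^i * t^(2*i) / fact i) \<le> exp (-a*t^2) * exp (a*t^2)"
    by (intro mult_left_mono) auto
  also have "\<dots> = 1" by (simp add: exp_add [symmetric])
  finally show "Eg a j t \<le> 1" by (simp add: Eg_def)
  show "0 \<le> Eg a j t" unfolding Eg_def using assms by (intro mult_nonneg_nonneg sum_nonneg) auto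
qed

lemma Eg_0 [simp]: "Eg a j 0 = 1"
proof -
  have "(\<Sum>i\<le>j. a^i * (0::real)^(2*i) / fact i) = 1" by (induction j) auto
  thus ?thesis by (simp add: Eg_def)
qed

lemma gauss_odd_integral:
  assumes a: "(a::real) > 0" and b: "b \<ge> 0"
  shows "((\<lambda>t. t^(2*j+1) * exp (-a*t^2)) has_integral
           (fact j / (2 * a^(j+1)) * (1 - Eg a j b))) {0..b}"
proof -
  define F where "F = (\<lambda>t. - (fact j / (2 * a^(j+1))) * Eg a j t)"
  have "(F has_real_derivative (t^(2*j+1) * exp (-a*t^2))) (at t)" for t
  proof -
    have tt: "(t^2)^j = t^(2*j)" by (simp add: power_mult)
    have "(F has_real_derivative (- (fact j / (2 * a^(j+1))) * (-2*a*t*exp(-a*t^2)*(a^j*t^(2*j))/fact j))) (at t)"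
      unfolding F_def by (intro DERIV_cmult Eg_deriv)
    also have "(- (fact j / (2 * a^(j+1))) * (-2*a*t*exp(-a*t^2)*(a^j*t^(2*j))/fact j)) = t^(2*j+1) * exp (-a*t^2)"
      using a by (simp add: field_simps power_add)
    finally show ?thesis .
  qed
  hence "((\<lambda>t. t^(2*j+1) * exp (-a*t^2)) has_integral (F b - F 0)) {0..b}"
    using b by (intro fundamental_theorem_of_calculus)
      (auto simp: has_real_derivative_iff_has_vector_derivative [symmetric] intro: DERIV_subset)
  also have "F b - F 0 = fact j / (2 * a^(j+1)) * (1 - Eg a j b)"
    unfolding F_def using a by (simp add: field_simps)
  finally show ?thesis .
qed

lemma gauss_odd_integral_le:
  assumes a: "(a::real) > 0" and b: "b \<ge> 0"
  shows "integral {0..b} (\<lambda>t. t^(2*j+1) * exp (-a*t^2)) \<le> fact j / (2 * a^(j+1))"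
proof -
  have "integral {0..b} (\<lambda>t. t^(2*j+1) * exp (-a*t^2)) = fact j / (2 * a^(j+1)) * (1 - Eg a j b)"
    using gauss_odd_integral[OF a b] by (rule integral_unique)
  also have "\<dots> \<le> fact j / (2 * a^(j+1)) * 1"
    using Eg_bounds[of a j b] a by (intro mult_left_mono) auto
  finally show ?thesis by simp
qed

lemma fps_taylor_bound:
  fixes F :: "complex fps" and r :: real
  assumes r: "r > 0" "ereal r < fps_conv_radius F"
  shows "\<exists>C. \<forall>z. norm z \<le> r \<longrightarrow>
           norm (eval_fps F z - (\<Sum>N\<le>D. fps_nth F N * z^N)) \<le> C * norm z ^ (D+1)"
proof -
  define G where "G = fps_shift (D+1) F"
  have radG: "fps_conv_radius G = fps_conv_radius F" by (simp add: G_def)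
  have sub: "cball 0 r \<subseteq> eball 0 (fps_conv_radius G)"
    using r radG by (auto simp: eball_def dist_norm le_less_trans intro: le_less_trans[of _ "ereal r"])
  have "continuous_on (cball 0 r) (eval_fps G)"
    by (rule continuous_on_subset[OF continuous_on_eval_fps sub])
  hence "compact (eval_fps G ` cball 0 r)"
    by (intro compact_continuous_image) auto
  hence "bounded (eval_fps G ` cball 0 r)" by (rule compact_imp_bounded)
  then obtain C where C: "C > 0" "\<And>z. z \<in> cball 0 r \<Longrightarrow> norm (eval_fps G z) \<le> C"
    unfolding bounded_pos by auto
  have eq: "eval_fps F z - (\<Sum>N\<le>D. fps_nth F N * z^N) = eval_fps G z * z^(D+1)"
    if z: "norm z \<le> r" for z
  proof -
    have zF: "norm z < fps_conv_radius F" using z r by (auto intro: le_less_trans[of _ "ereal r"])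
    have s1: "(\<lambda>N. fps_nth F N * z^N) sums eval_fps F z" by (rule sums_eval_fps[OF zF])
    have s2: "(\<lambda>i. fps_nth F (i + (D+1)) * z^(i + (D+1))) sums
                (eval_fps F z - (\<Sum>N<D+1. fps_nth F N * z^N))"
      using sums_split_initial_segment[OF s1, of "D+1"] by simp
    have s3: "(\<lambda>i. fps_nth G i * z^i) sums eval_fps G z"
      by (rule sums_eval_fps) (use zF radG in simp)
    have s4: "(\<lambda>i. fps_nth G i * z^i * z^(D+1)) sums (eval_fps G z * z^(D+1))"
      by (rule sums_mult2[OF s3])
    have "(\<lambda>i. fps_nth G i * z^i * z^(D+1)) = (\<lambda>i. fps_nth F (i + (D+1)) * z^(i + (D+1)))"
      by (auto simp: G_def power_add)
    with s4 have "(\<lambda>i. fps_nth F (i + (D+1)) * z^(i + (D+1))) sums (eval_fps G z * z^(D+1))" by simp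
    with s2 have "eval_fps F z - (\<Sum>N<D+1. fps_nth F N * z^N) = eval_fps G z * z^(D+1)"
      using sums_unique2 by blast
    moreover have "(\<Sum>N<D+1. fps_nth F N * z^N) = (\<Sum>N\<le>D. fps_nth F N * z^N)"
      by (simp add: lessThan_Suc_atMost)
    ultimately show ?thesis by simp
  qed
  show ?thesis
  proof (intro exI allI impI)
    fix z :: complex assume z: "norm z \<le> r"
    have "norm (eval_fps F z - (\<Sum>N\<le>D. fps_nth F N * z^N)) = norm (eval_fps G z) * norm z ^ (D+1)"
      by (simp add: eq[OF z] norm_mult norm_power)
    also have "\<dots> \<le> C * norm z ^ (D+1)"
      using C(2)[of z] z by (intro mult_right_mono) auto
    finally show "norm (eval_fps F z - (\<Sum>N\<le>D. fps_nth F N * z^N)) \<le> C * norm z ^ (D+1)" .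
  qed
qed

lemma Fq_sums:
  assumes "cmod z < 1"
  shows "(\<lambda>n. fps_nth Fq n * z^n) sums (Ln (1 + z) - z + z^2/2)"
proof -
  define L where "L = (\<lambda>n. - ((- z) ^ n) / (of_nat n :: complex))"
  have s0: "L sums Ln (1 + z)" unfolding L_def by (rule Ln_series'[OF assms])
  have s1: "(\<lambda>n. if n = 1 then L n else 0) sums L 1" by (rule sums_single)
  have s2: "(\<lambda>n. if n = 2 then L n else 0) sums L 2" by (rule sums_single)
  have s: "(\<lambda>n. L n - (if n = 1 then L n else 0) - (if n = 2 then L n else 0)) sums (Ln (1 + z) - L 1 - L 2)"
    by (intro sums_diff s0 s1 s2)
  have eq: "(\<lambda>n. L n - (if n = 1 then L n else 0) - (if n = 2 then L n else 0)) = (\<lambda>n. fps_nth Fq n * z^n)"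
  proof
    fix n :: nat
    consider "n = 0" | "n = 1" | "n = 2" | "n \<ge> 3" by linarith
    then show "L n - (if n = 1 then L n else 0) - (if n = 2 then L n else 0) = fps_nth Fq n * z^n"
    proof cases
      case 4
      have "fps_nth Fq n = -((-1)^n) / of_nat n" using 4 by (simp add: Fq_def)
      moreover have "(-z)^n = (-1)^n * z^n" by (rule power_minus)
      ultimately show ?thesis using 4 by (simp add: L_def)
    qed (auto simp: L_def Fq_def)
  qed
  have "L 1 = z" "L 2 = - (z^2/2)" by (simp_all add: L_def)
  with s eq show ?thesis by (simp add: algebra_simps)
qed

lemma Fq_expansion: "(\<lambda>z. Ln (1 + z) - z + z^2/2) has_fps_expansion Fq"
proof (rule has_fps_expansionI)
  have "eventually (\<lambda>z::complex. z \<in> ball 0 1) (nhds 0)"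
    by (intro eventually_nhds_in_open) auto
  then show "eventually (\<lambda>u. (\<lambda>n. fps_nth Fq n * u ^ n) sums (Ln (1 + u) - u + u^2/2)) (nhds 0)"
    by (rule eventually_mono) (auto intro: Fq_sums)
qed

lemma Fq_low: "(\<Sum>N\<le>2. fps_nth Fq N * z^N) = 0"
  by (simp add: Fq_def numeral_2_eq_2)

lemma exists_radius:
  fixes F :: "complex fps"
  assumes "fps_conv_radius F > 0"
  shows "\<exists>r>0. ereal r < fps_conv_radius F"
  using ereal_dense2[OF assms[unfolded zero_ereal_def]] by auto

lemma setup_delta:
  fixes v :: complex
  shows "\<exists>r>0. r \<le> 1/2 \<and> ereal r < fps_conv_radius Fq \<and> ereal r < fps_conv_radius (fps_binomial v) \<and>
     (\<forall>u::real. \<bar>u\<bar> \<le> r \<longrightarrow> eval_fps Fq (of_real u) = Ln (1 + of_real u) - of_real u + (of_real u)^2/2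
                   \<and> eval_fps (fps_binomial v) (of_real u) = (1 + of_real u) powr v)"
proof -
  obtain r1 where r1: "r1 > 0" "ereal r1 < fps_conv_radius Fq"
    using exists_radius Fq_expansion unfolding has_fps_expansion_def by blast
  obtain r2 where r2: "r2 > 0" "ereal r2 < fps_conv_radius (fps_binomial v)"
    using exists_radius has_fps_expansion_binomial_complex[of v] unfolding has_fps_expansion_def by blast
  have ev: "eventually (\<lambda>z. eval_fps Fq z = Ln (1 + z) - z + z^2/2 \<and> eval_fps (fps_binomial v) z = (1 + z) powr v) (nhds 0)"
    using Fq_expansion has_fps_expansion_binomial_complex[of v]
    unfolding has_fps_expansion_def by (auto elim: eventually_elim2)
  then obtain d where d: "d > 0" "\<And>z. dist z 0 < d \<Longrightarrow> eval_fps Fq z = Ln (1 + z) - z + z^2/2 \<and> eval_fps (fps_binomial v) z = (1 + z) powr v"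
    unfolding eventually_nhds_metric by blast
  define r where "r = min (min (r1/2) (r2/2)) (min (d/2) (1/2))"
  have "r > 0" using r1 r2 d by (simp add: r_def)
  moreover have "r \<le> 1/2" by (simp add: r_def)
  moreover have "r \<le> r1" "r \<le> r2" using r1 r2 by (simp_all add: r_def)
  hence "ereal r \<le> ereal r1" "ereal r \<le> ereal r2" by simp_all
  moreover have "ereal r < fps_conv_radius Fq"
    by (rule le_less_trans[OF _ r1(2)]) (use \<open>ereal r \<le> ereal r1\<close> in simp)
  moreover have "ereal r < fps_conv_radius (fps_binomial v)"
    by (rule le_less_trans[OF _ r2(2)]) (use \<open>ereal r \<le> ereal r2\<close> in simp)
  moreover have "\<forall>u::real. \<bar>u\<bar> \<le> r \<longrightarrow> eval_fps Fq (of_real u) = Ln (1 + of_real u) - of_real u + (of_real u)^2/2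
                   \<and> eval_fps (fps_binomial v) (of_real u) = (1 + of_real u) powr v"
  proof (intro allI impI)
    fix u :: real assume "\<bar>u\<bar> \<le> r"
    hence "dist (complex_of_real u) 0 < d" using d by (simp add: r_def)
    thus "eval_fps Fq (of_real u) = Ln (1 + of_real u) - of_real u + (of_real u)^2/2
                   \<and> eval_fps (fps_binomial v) (of_real u) = (1 + of_real u) powr v"
      using d(2) by blast
  qed
  ultimately show ?thesis by blast
qed

definition gp :: "real \<Rightarrow> complex \<Rightarrow> real \<Rightarrow> complex" where
  "gp n v u = of_real (exp (n*(-u))) * exp ((of_real n + v) * of_real (ln (1+u)))"

definition Pk :: "nat \<Rightarrow> complex \<Rightarrow> nat \<Rightarrow> real \<Rightarrow> complex" where
  "Pk K v k u = (\<Sum>N<3*K. fps_nth (Hf v k) N * of_real u ^ N)"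

definition Aap :: "nat \<Rightarrow> real \<Rightarrow> complex \<Rightarrow> real \<Rightarrow> complex" where
  "Aap K n v u = of_real (exp (-n*u^2/2)) * (\<Sum>k<K. of_real (n^k / fact k) * Pk K v k u)"

lemma div_fact_le: "(a::real) \<ge> 0 \<Longrightarrow> a / fact k \<le> a"
proof -
  assume a: "a \<ge> 0"
  have "a / fact k \<le> a / 1"
    using a by (intro divide_left_mono) (auto simp: fact_ge_1)
  thus ?thesis by simp
qed

lemma approx_bound:
  fixes v :: complex
  assumes K: "K \<ge> 1"
  shows "\<exists>\<delta>>0. \<delta> \<le> 1/2 \<and> (\<exists>C. \<forall>n\<ge>1. \<forall>u. \<bar>u\<bar> \<le> \<delta> \<longrightarrow>
            norm (gp n v u - Aap K n v u) \<le> C * n^K * \<bar>u\<bar>^(3*K) * exp (-n*u^2/4))"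
proof -
  obtain r where r: "r > 0" "r \<le> 1/2" "ereal r < fps_conv_radius Fq" "ereal r < fps_conv_radius (fps_binomial v)"
    and rev: "\<And>u::real. \<bar>u\<bar> \<le> r \<Longrightarrow> eval_fps Fq (of_real u) = Ln (1 + of_real u) - of_real u + (of_real u)^2/2
                   \<and> eval_fps (fps_binomial v) (of_real u) = (1 + of_real u) powr v"
    using setup_delta[of v] by blast
  obtain Cq where Cq: "\<And>z. norm z \<le> r \<Longrightarrow> norm (eval_fps Fq z - (\<Sum>N\<le>2. fps_nth Fq N * z^N)) \<le> Cq * norm z ^ 3"
    using fps_taylor_bound[OF r(1) r(3), of 2] by auto
  obtain C0 where C0: "\<And>z. norm z \<le> r \<Longrightarrow> norm (eval_fps (fps_binomial v) z - (\<Sum>N\<le>0. fps_nth (fps_binomial v) N * z^N)) \<le> C0 * norm z ^ 1"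
    using fps_taylor_bound[OF r(1) r(4), of 0] by auto
  have radH: "ereal r < fps_conv_radius (Hf v k)" for k
  proof -
    have "ereal r < min (fps_conv_radius (Fq ^ k)) (fps_conv_radius (fps_binomial v))"
      using r(3,4) fps_conv_radius_power[of Fq k] by (auto simp: min_less_iff_conj)
    also have "\<dots> \<le> fps_conv_radius (Hf v k)" unfolding Hf_def by (rule fps_conv_radius_mult)
    finally show ?thesis .
  qed
  have "\<forall>k. \<exists>C. \<forall>z. norm z \<le> r \<longrightarrow> norm (eval_fps (Hf v k) z - (\<Sum>N\<le>3*K-1. fps_nth (Hf v k) N * z^N)) \<le> C * norm z ^ (3*K-1+1)"
    using fps_taylor_bound[OF r(1) radH] by blast
  then obtain Cf where Cf: "\<And>k z. norm z \<le> r \<Longrightarrow> norm (eval_fps (Hf v k) z - (\<Sum>N\<le>3*K-1. fps_nth (Hf v k) N * z^N)) \<le> Cf k * norm z ^ (3*K-1+1)"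
    by metis
  have idx: "{..3*K-1} = {..<3*K}" "3*K-1+1 = 3*K" using K by auto
  define Cq' where "Cq' = \<bar>Cq\<bar>"
  define CB where "CB = 1 + \<bar>C0\<bar>"
  define SC where "SC = (\<Sum>k<K. \<bar>Cf k\<bar>)"
  define \<delta> where "\<delta> = min r (1 / (4 * (Cq' + 1)))"
  have \<delta>: "\<delta> > 0" "\<delta> \<le> r" "\<delta> \<le> 1/2" "Cq' * \<delta> \<le> 1/4"
  proof -
    show "\<delta> > 0" "\<delta> \<le> r" "\<delta> \<le> 1/2" using r by (auto simp: \<delta>_def Cq'_def)
    have "Cq' * \<delta> \<le> Cq' * (1 / (4 * (Cq' + 1)))"
      by (intro mult_left_mono) (auto simp: \<delta>_def Cq'_def)
    also have "\<dots> \<le> 1/4" by (simp add: Cq'_def field_simps)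
    finally show "Cq' * \<delta> \<le> 1/4" .
  qed
  have main: "norm (gp n v u - Aap K n v u) \<le> (CB * Cq'^K + SC) * n^K * \<bar>u\<bar>^(3*K) * exp (-n*u^2/4)"
    if n: "n \<ge> 1" and u: "\<bar>u\<bar> \<le> \<delta>" for n u :: real
  proof -
    define z where "z = complex_of_real u"
    define L where "L = ln (1 + u)"
    define qv where "qv = L - u + u^2/2"
    define B where "B = eval_fps (fps_binomial v) z"
    define x where "x = n * qv"
    define e1 where "e1 = exp (-n*u^2/2)"
    have ur: "\<bar>u\<bar> \<le> r" using u \<delta> by linarith
    have nz: "norm z \<le> r" using ur by (simp add: z_def)
    have u1: "1 + u > 0" using ur r by linarith
    have Lc: "Ln (1 + z) = of_real L"
      using Ln_of_real[OF u1] by (simp add: z_def L_def)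
    have evq: "eval_fps Fq z = of_real qv"
      using rev[OF ur] Lc by (simp add: z_def qv_def)
    have Bdef: "B = exp (v * of_real L)"
    proof -
      have "B = (1 + z) powr v" using rev[OF ur] by (simp add: B_def z_def)
      also have "1 + z \<noteq> 0" using u1 by (simp add: z_def complex_eq_iff)
      hence "(1 + z) powr v = exp (v * of_real L)" using Lc by (simp add: powr_def)
      finally show ?thesis .
    qed
    have qbound: "\<bar>qv\<bar> \<le> Cq' * \<bar>u\<bar>^3"
    proof -
      have "norm (eval_fps Fq z) \<le> Cq * norm z ^ 3" using Cq[OF nz] by (simp add: Fq_low)
      thus ?thesis using evq by (simp add: z_def Cq'_def) (smt (verit) mult_right_mono zero_le_power abs_ge_zero)
    qed
    have Bbound: "norm B \<le> CB"
    proof -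
      have "norm (B - 1) \<le> C0 * norm z" using C0[OF nz] by (simp add: B_def)
      also have "\<dots> \<le> \<bar>C0\<bar> * 1"
        using nz r by (intro mult_mono) auto
      finally have "norm (B - 1) \<le> \<bar>C0\<bar>" by simp
      thus ?thesis unfolding CB_def using norm_triangle_ineq2[of B 1] by simp
    qed
    have gp_eq: "gp n v u = of_real e1 * (of_real (exp x) * B)"
    proof -
      have "gp n v u = exp (of_real (n*(-u))) * exp ((of_real n + v) * of_real L)"
        by (simp only: gp_def L_def exp_of_real)
      also have "\<dots> = exp (of_real (n*(-u)) + (of_real n + v) * of_real L)"
        by (simp only: exp_add)
      also have "of_real (n*(-u)) + (of_real n + v) * of_real L = of_real (-n*u^2/2) + of_real x + v * of_real L"
        by (simp add: x_def qv_def algebra_simps)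
      also have "exp \<dots> = of_real e1 * (of_real (exp x) * B)"
        by (simp only: exp_add Bdef e1_def exp_of_real [symmetric] mult.assoc)
      finally show ?thesis .
    qed
    have evH: "eval_fps (Hf v k) z = of_real qv ^ k * B" for k
    proof -
      have z1: "norm z < fps_conv_radius Fq" using nz r(3) by (auto intro: le_less_trans[of _ "ereal r"])
      have z2: "norm z < fps_conv_radius (fps_binomial v)" using nz r(4) by (auto intro: le_less_trans[of _ "ereal r"])
      have z3: "norm z < fps_conv_radius (Fq ^ k)" using z1 fps_conv_radius_power[of Fq k] by (auto intro: less_le_trans)
      show ?thesis unfolding Hf_def
        by (simp add: eval_fps_mult[OF z3 z2] eval_fps_power[OF z1] evq B_def)
    qed
    have Pbound: "norm (of_real qv ^ k * B - Pk K v k u) \<le> \<bar>Cf k\<bar> * \<bar>u\<bar>^(3*K)" for k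
    proof -
      have "norm (of_real qv ^ k * B - Pk K v k u) \<le> Cf k * norm z ^ (3*K)"
        using Cf[OF nz, of k] unfolding evH idx by (simp add: Pk_def z_def)
      also have "\<dots> \<le> \<bar>Cf k\<bar> * \<bar>u\<bar>^(3*K)" by (simp add: z_def mult_right_mono)
      finally show ?thesis .
    qed
    have xb: "\<bar>x\<bar> \<le> n * Cq' * \<bar>u\<bar>^3"
      using qbound n by (simp add: x_def abs_mult mult.assoc mult_left_mono)
    have xb2: "\<bar>x\<bar> \<le> n * u^2 / 4"
    proof -
      have "Cq' * \<bar>u\<bar>^3 = (Cq' * \<bar>u\<bar>) * u^2" by (simp add: power3_eq_cube power2_eq_square)
      also have "\<dots> \<le> (1/4) * u^2"
      proof (intro mult_right_mono)
        have "Cq' * \<bar>u\<bar> \<le> Cq' * \<delta>" using u by (intro mult_left_mono) (auto simp: Cq'_def)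
        thus "Cq' * \<bar>u\<bar> \<le> 1/4" using \<delta>(4) by linarith
      qed auto
      finally have "Cq' * \<bar>u\<bar>^3 \<le> u^2/4" by simp
      hence "n * (Cq' * \<bar>u\<bar>^3) \<le> n * (u^2/4)" using n by (intro mult_left_mono) auto
      thus ?thesis using xb by (simp add: mult.assoc)
    qed
    define T where "T = exp x - (\<Sum>k<K. x^k / fact k)"
    have Tb: "\<bar>T\<bar> \<le> exp (n*u^2/4) * (n * Cq' * \<bar>u\<bar>^3)^K"
    proof -
      have "\<bar>T\<bar> \<le> exp \<bar>x\<bar> * \<bar>x\<bar>^K / fact K" unfolding T_def by (rule exp_taylor_bound)
      also have "\<dots> \<le> exp \<bar>x\<bar> * \<bar>x\<bar>^K"
      proof -
        have a0: "0 \<le> exp \<bar>x\<bar> * \<bar>x\<bar>^K" by simp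
        show ?thesis using a0 by (rule div_fact_le)
      qed
      also have "\<dots> \<le> exp (n*u^2/4) * (n * Cq' * \<bar>u\<bar>^3)^K"
        using xb xb2 by (intro mult_mono power_mono) auto
      finally show ?thesis .
    qed
    have split: "gp n v u - Aap K n v u = of_real e1 * (of_real T * B +
                  (\<Sum>k<K. of_real (n^k / fact k) * (of_real qv ^ k * B - Pk K v k u)))"
    proof -
      have "(\<Sum>k<K. of_real (n^k / fact k) * (of_real qv ^ k * B)) = of_real (\<Sum>k<K. x^k / fact k) * B"
        unfolding of_real_sum sum_distrib_right
        by (intro sum.cong refl) (simp add: x_def power_mult_distrib)
      then show ?thesis
        by (simp add: gp_eq Aap_def T_def e1_def algebra_simps sum_subtractf sum_distrib_left)
    qed
    have "norm (gp n v u - Aap K n v u) \<le> e1 * (\<bar>T\<bar> * CB + (\<Sum>k<K. n^K * (\<bar>Cf k\<bar> * \<bar>u\<bar>^(3*K))))"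
    proof -
      have "norm (gp n v u - Aap K n v u) = e1 * norm (of_real T * B +
                  (\<Sum>k<K. of_real (n^k / fact k) * (of_real qv ^ k * B - Pk K v k u)))"
        unfolding split by (simp add: norm_mult e1_def)
      also have "\<dots> \<le> e1 * (\<bar>T\<bar> * CB + (\<Sum>k<K. n^K * (\<bar>Cf k\<bar> * \<bar>u\<bar>^(3*K))))"
      proof (intro mult_left_mono)
        show "0 \<le> e1" by (simp add: e1_def)
        have a: "norm (of_real T * B) \<le> \<bar>T\<bar> * CB"
          using Bbound by (simp add: norm_mult mult_left_mono)
        have b: "norm (\<Sum>k<K. of_real (n^k / fact k) * (of_real qv ^ k * B - Pk K v k u))
                 \<le> (\<Sum>k<K. n^K * (\<bar>Cf k\<bar> * \<bar>u\<bar>^(3*K)))"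
        proof (rule order_trans[OF norm_sum sum_mono])
          fix k assume k: "k \<in> {..<K}"
          have ab: "\<bar>n^k / fact k\<bar> = n^k / fact k" using n by simp
          have "norm (of_real (n^k / fact k) * (of_real qv ^ k * B - Pk K v k u :: complex))
                = (n^k / fact k) * norm (of_real qv ^ k * B - Pk K v k u)"
            using ab by (simp only: norm_mult norm_of_real)
          also have "\<dots> \<le> n^K * (\<bar>Cf k\<bar> * \<bar>u\<bar>^(3*K))"
          proof (intro mult_mono Pbound)
            have a0: "0 \<le> n^k" using n by simp
            have "n^k / fact k \<le> n^k" using a0 by (rule div_fact_le)
            also have "n^k \<le> n^K" using n k by (intro power_increasing) auto
            finally show "n^k / fact k \<le> n^K" .
          qed (use n in auto)
          finally show "norm (of_real (n^k / fact k) * (of_real qv ^ k * B - Pk K v k u :: complex))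
                \<le> n^K * (\<bar>Cf k\<bar> * \<bar>u\<bar>^(3*K))" .
        qed
        show "norm (of_real T * B + (\<Sum>k<K. of_real (n^k / fact k) * (of_real qv ^ k * B - Pk K v k u)))
              \<le> \<bar>T\<bar> * CB + (\<Sum>k<K. n^K * (\<bar>Cf k\<bar> * \<bar>u\<bar>^(3*K)))"
          by (rule order_trans[OF norm_triangle_ineq add_mono[OF a b]])
      qed
      finally show ?thesis .
    qed
    also have "\<dots> \<le> e1 * (exp (n*u^2/4) * (n * Cq' * \<bar>u\<bar>^3)^K * CB + n^K * SC * \<bar>u\<bar>^(3*K))"
    proof (intro mult_left_mono add_mono)
      show "\<bar>T\<bar> * CB \<le> exp (n*u^2/4) * (n * Cq' * \<bar>u\<bar>^3)^K * CB"
        using Tb by (intro mult_right_mono) (auto simp: CB_def)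
      show "(\<Sum>k<K. n^K * (\<bar>Cf k\<bar> * \<bar>u\<bar>^(3*K))) \<le> n^K * SC * \<bar>u\<bar>^(3*K)"
        by (simp add: SC_def sum_distrib_left sum_distrib_right algebra_simps)
    qed (simp add: e1_def)
    also have "\<dots> = (e1 * exp (n*u^2/4)) * (CB * Cq'^K) * n^K * \<bar>u\<bar>^(3*K) + e1 * SC * n^K * \<bar>u\<bar>^(3*K)"
    proof -
      have "(\<bar>u\<bar>^3)^K = \<bar>u\<bar>^(3*K)" by (simp add: power_mult)
      thus ?thesis by (simp add: power_mult_distrib algebra_simps)
    qed
    also have "e1 * exp (n*u^2/4) = exp (-n*u^2/4)"
      by (simp add: e1_def exp_add [symmetric])
    also have "e1 \<le> exp (-n*u^2/4)"
      using n by (simp add: e1_def)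
    hence "e1 * SC * n^K * \<bar>u\<bar>^(3*K) \<le> exp (-n*u^2/4) * SC * n^K * \<bar>u\<bar>^(3*K)"
      using n by (intro mult_right_mono) (auto simp: SC_def)
    finally show ?thesis by (simp add: algebra_simps)
  qed
  show ?thesis
    using \<delta> main by blast
qed

lemma sum_even_odd_split: "(\<Sum>N<2*J. f N) = (\<Sum>j<J. f (2*j)) + (\<Sum>j<J. f (2*j+1))"
  for f :: "nat \<Rightarrow> 'a::comm_monoid_add"
  by (induction J) (simp_all add: algebra_simps)

lemma Pk_odd:
  "Pk (2*M) v k (-t) - Pk (2*M) v k t =
     (\<Sum>j<3*M. fps_nth (Hf v k) (2*j+1) * (-2) * of_real (t^(2*j+1)))"
proof -
  have "Pk (2*M) v k (-t) - Pk (2*M) v k t =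
        (\<Sum>N<2*(3*M). fps_nth (Hf v k) N * (of_real (-t) ^ N - of_real t ^ N))"
    unfolding Pk_def by (simp add: sum_subtractf algebra_simps)
  also have "\<dots> = (\<Sum>j<3*M. fps_nth (Hf v k) (2*j) * (of_real (-t) ^ (2*j) - of_real t ^ (2*j))) +
                   (\<Sum>j<3*M. fps_nth (Hf v k) (2*j+1) * (of_real (-t) ^ (2*j+1) - of_real t ^ (2*j+1)))"
    by (rule sum_even_odd_split)
  also have "(\<Sum>j<3*M. fps_nth (Hf v k) (2*j) * (of_real (-t) ^ (2*j) - of_real t ^ (2*j))) = 0"
    by (intro sum.neutral) (simp add: power_mult)
  also have "(\<Sum>j<3*M. fps_nth (Hf v k) (2*j+1) * (of_real (-t) ^ (2*j+1) - of_real t ^ (2*j+1)))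
           = (\<Sum>j<3*M. fps_nth (Hf v k) (2*j+1) * (-2) * of_real (t^(2*j+1)))"
    by (intro sum.cong refl) (simp add: power_mult)
  finally show ?thesis by simp
qed

lemma Aap_odd:
  "Aap (2*M) n v (-t) - Aap (2*M) n v t =
     (\<Sum>k<2*M. \<Sum>j<3*M. of_real (n^k / fact k) * fps_nth (Hf v k) (2*j+1) * (-2) *
         of_real (t^(2*j+1) * exp (-(n/2)*t^2)))"
proof -
  have "Aap (2*M) n v (-t) - Aap (2*M) n v t =
      of_real (exp (-n*t^2/2)) * (\<Sum>k<2*M. of_real (n^k / fact k) * (Pk (2*M) v k (-t) - Pk (2*M) v k t))"
    unfolding Aap_def by (simp add: sum_subtractf algebra_simps)
  also have "\<dots> = (\<Sum>k<2*M. \<Sum>j<3*M. of_real (n^k / fact k) * fps_nth (Hf v k) (2*j+1) * (-2) *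
         of_real (t^(2*j+1) * exp (-(n/2)*t^2)))"
    unfolding Pk_odd sum_distrib_left
    by (intro sum.cong refl) (simp add: algebra_simps)
  finally show ?thesis .
qed

lemma main_integral:
  assumes n: "n > 0" and d: "\<delta> \<ge> 0"
  shows "((\<lambda>t. Aap (2*M) n v (-t) - Aap (2*M) n v t) has_integral
          (- (2 / of_real n)) * (\<Sum>k<2*M. \<Sum>j<3*M. cc v k j * of_real (n^k / n^j) *
                                     of_real (1 - Eg (n/2) j \<delta>))) {0..\<delta>}"
proof -
  have a: "n/2 > 0" using n by simp
  have I: "((\<lambda>t. \<Sum>k<2*M. \<Sum>j<3*M. of_real (n^k / fact k) * fps_nth (Hf v k) (2*j+1) * (-2) *
         of_real (t^(2*j+1) * exp (-(n/2)*t^2))) has_integral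
         (\<Sum>k<2*M. \<Sum>j<3*M. of_real (n^k / fact k) * fps_nth (Hf v k) (2*j+1) * (-2) *
         of_real (fact j / (2 * (n/2)^(j+1)) * (1 - Eg (n/2) j \<delta>)))) {0..\<delta>}"
    by (intro has_integral_sum finite_lessThan has_integral_mult_right has_integral_of_real
              gauss_odd_integral[OF a d])
  have val: "(\<Sum>k<2*M. \<Sum>j<3*M. of_real (n^k / fact k) * fps_nth (Hf v k) (2*j+1) * (-2) *
         of_real (fact j / (2 * (n/2)^(j+1)) * (1 - Eg (n/2) j \<delta>)))
       = (- (2 / of_real n)) * (\<Sum>k<2*M. \<Sum>j<3*M. cc v k j * of_real (n^k / n^j) *
                                     of_real (1 - Eg (n/2) j \<delta>))"
    unfolding sum_distrib_left
  proof (intro sum.cong refl)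
    fix k j
    have "(n/2)^(j+1) = n^(j+1) / 2^(j+1)" by (simp add: power_divide)
    then show "of_real (n^k / fact k) * fps_nth (Hf v k) (2*j+1) * (-2) *
         of_real (fact j / (2 * (n/2)^(j+1)) * (1 - Eg (n/2) j \<delta>))
       = - (2 / of_real n) * (cc v k j * of_real (n^k / n^j) * of_real (1 - Eg (n/2) j \<delta>))"
      using n by (simp add: cc_def field_simps)
  qed
  show ?thesis
    using I unfolding val Aap_odd[symmetric] .
qed

lemma has_integral_affine_real:
  fixes f :: "real \<Rightarrow> 'b::real_normed_vector"
  assumes "(f has_integral i) {a..b}" "a \<le> b" "m \<noteq> 0"
  shows "((\<lambda>x. f (m * x + c)) has_integral ((1 / \<bar>m\<bar>) *\<^sub>R i))
           ((\<lambda>x. (1/m) * x + - ((1/m) * c)) ` {a..b})"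
  using has_integral_affinity[of f i a b m c] assms by (simp add: cbox_interval)

lemma has_integral_shift1:
  fixes f :: "real \<Rightarrow> 'b::real_normed_vector"
  assumes "(f has_integral i) {1..1+d}" "d \<ge> 0"
  shows "((\<lambda>t. f (1 + t)) has_integral i) {0..d}"
proof -
  have "((\<lambda>x. f (1 * x + 1)) has_integral ((1 / \<bar>1\<bar>) *\<^sub>R i)) ((\<lambda>x. (1/1) * x + - ((1/1) * 1)) ` {1..1+d})"
    by (rule has_integral_affine_real) (use assms in auto)
  moreover have "(\<lambda>x. (1/1) * x + - ((1/1) * (1::real))) ` {1..1+d} = {0..d}"
    using image_add_atLeastAtMost[of "-1::real" 1 "1+d"] by (simp add: add.commute)
  ultimately show ?thesis by (simp add: add.commute)
qed

lemma has_integral_reflect1: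
  fixes f :: "real \<Rightarrow> 'b::real_normed_vector"
  assumes "(f has_integral i) {1-d..1}" "d \<ge> 0"
  shows "((\<lambda>t. f (1 - t)) has_integral i) {0..d}"
proof -
  have "((\<lambda>x. f ((-1) * x + 1)) has_integral ((1 / \<bar>-1\<bar>) *\<^sub>R i)) ((\<lambda>x. (1/(-1)) * x + - ((1/(-1)) * 1)) ` {1-d..1})"
    by (rule has_integral_affine_real) (use assms in auto)
  moreover have "(\<lambda>x. (1/(-1)) * x + - ((1/(-1)) * (1::real))) ` {1-d..1} = {0..d}"
  proof -
    have "(\<lambda>x. (1/(-1)) * x + - ((1/(-1)) * (1::real))) = (\<lambda>x. (-1) *\<^sub>R x + 1)" by auto
    thus ?thesis using assms(2) by (simp add: image_affinity_cbox[of "-1::real" 1 "1-d" 1, unfolded cbox_interval])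
  qed
  ultimately show ?thesis by simp
qed

lemma has_integral_scale:
  fixes f :: "real \<Rightarrow> 'b::real_normed_vector"
  assumes "(f has_integral i) {0..n*b}" "n > 0" "b \<ge> 0"
  shows "((\<lambda>s. f (n * s)) has_integral ((1/n) *\<^sub>R i)) {0..b}"
proof -
  have "((\<lambda>x. f (n * x + 0)) has_integral ((1 / \<bar>n\<bar>) *\<^sub>R i)) ((\<lambda>x. (1/n) * x + - ((1/n) * 0)) ` {0..n*b})"
    by (rule has_integral_affine_real) (use assms in auto)
  moreover have "(\<lambda>x. (1/n) * x + - ((1/n) * 0)) ` {0..n*b} = {0..b}"
    using image_mult_atLeastAtMost[of "1/n" 0 "n*b"] assms by simp
  ultimately show ?thesis using assms by simp
qed

definition gfun :: "real \<Rightarrow> complex \<Rightarrow> real \<Rightarrow> complex" where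
  "gfun n v s = of_real (exp (n * (1 - s))) * (of_real s) powr (of_real n + v)"

definition ffun :: "real \<Rightarrow> complex \<Rightarrow> real \<Rightarrow> complex" where
  "ffun n v t = (of_real t) powr (of_real n + v) / of_real (exp t)"

lemma cont_gfun:
  assumes "n + Re v > 0"
  shows "continuous_on {0..B} (gfun n v)"
  unfolding gfun_def
  by (intro continuous_intros) (use assms in auto)

lemma cont_ffun:
  assumes "n + Re v > 0"
  shows "continuous_on {0..B} (ffun n v)"
  unfolding ffun_def
  by (intro continuous_intros) (use assms in auto)

lemma gamma_split:
  assumes "n + Re v > 0" "T > 0"
  shows "ffun n v integrable_on {T..}"
    "Gamma (of_real n + v + 1) = integral {0..T} (ffun n v) + integral {T..} (ffun n v)"
proof -
  have G: "(ffun n v has_integral Gamma (of_real n + v + 1)) {0..}"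
    unfolding ffun_def using Gamma_integral_complex[of "of_real n + v + 1"] assms by simp
  have ai: "ffun n v absolutely_integrable_on {0<..}"
    unfolding ffun_def using absolutely_integrable_Gamma_integral'[of "of_real n + v + 1"] assms by simp
  have "ffun n v absolutely_integrable_on {T..}"
    by (rule set_integrable_subset[OF ai]) (use assms in auto)
  thus i2: "ffun n v integrable_on {T..}" by (rule set_lebesgue_integral_eq_integral)
  have i1: "ffun n v integrable_on {0..T}"
    by (rule integrable_continuous_interval[OF cont_ffun]) (use assms in auto)
  have "(ffun n v has_integral (integral {0..T} (ffun n v) + integral {T..} (ffun n v))) ({0..T} \<union> {T..})"
    by (intro has_integral_Un i1[unfolded has_integral_integral] i2[unfolded has_integral_integral])
       (auto intro: negligible_subset[of "{T}"])
  moreover have "{0..T} \<union> {T..} = {0::real..}" using assms by auto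
  ultimately show "Gamma (of_real n + v + 1) = integral {0..T} (ffun n v) + integral {T..} (ffun n v)"
    using G has_integral_unique by metis
qed

lemma compact_part:
  assumes nv: "n + Re v > 0" and n: "n > 0" and b: "b \<ge> 0"
  shows "integral {0..n*b} (ffun n v) =
           of_real n * (of_real n powr (of_real n + v)) * of_real (exp (-n)) * integral {0..b} (gfun n v)"
proof -
  define w where "w = of_real n + v"
  have i1: "(ffun n v has_integral integral {0..n*b} (ffun n v)) {0..n*b}"
    using integrable_continuous_interval[OF cont_ffun[OF nv]] by (simp add: has_integral_integral)
  have hi: "((\<lambda>s. ffun n v (n * s)) has_integral ((1/n) *\<^sub>R integral {0..n*b} (ffun n v))) {0..b}"
    by (rule has_integral_scale[OF i1 n b])
  have eqs: "ffun n v (n * s) = (of_real n powr w * of_real (exp (-n))) * gfun n v s" if "s \<in> {0..b}" for s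
  proof -
    have s: "s \<ge> 0" using that by auto
    have "of_real (n * s) powr w = of_real n powr w * of_real s powr w"
      using powr_times_real[of "of_real n" "of_real s" w] n s by simp
    moreover have "exp (n * (1 - s)) = exp n * exp (- (n * s))" by (simp add: exp_add [symmetric] algebra_simps)
    hence "(of_real (exp (n * (1 - s))) :: complex) = of_real (exp n) * of_real (exp (- (n * s)))" by simp
    ultimately show ?thesis
      by (simp add: ffun_def gfun_def w_def exp_minus field_simps)
  qed
  define c where "c = of_real n powr w * of_real (exp (-n))"
  have hc: "((\<lambda>s. c * gfun n v s) has_integral
        ((1/n) *\<^sub>R integral {0..n*b} (ffun n v))) {0..b}"
    unfolding c_def by (rule has_integral_spike_finite[OF _ _ hi, of "{}"]) (auto simp: eqs)
  have c0: "c \<noteq> 0" using n by (simp add: c_def)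
  have "((\<lambda>s. inverse c * (c * gfun n v s)) has_integral inverse c * ((1/n) *\<^sub>R integral {0..n*b} (ffun n v))) {0..b}"
    by (rule has_integral_mult_right[OF hc])
  moreover have "(\<lambda>s. inverse c * (c * gfun n v s)) = gfun n v" using c0 by (auto simp: field_simps)
  ultimately have "(gfun n v has_integral
        ((1/n) *\<^sub>R integral {0..n*b} (ffun n v)) / (of_real n powr w * of_real (exp (-n)))) {0..b}"
    by (simp add: c_def divide_inverse mult.commute)
  hence "integral {0..b} (gfun n v) = ((1/n) *\<^sub>R integral {0..n*b} (ffun n v)) / (of_real n powr w * of_real (exp (-n)))"
    by (rule integral_unique)
  thus ?thesis using n by (simp add: w_def field_simps scaleR_conv_of_real)
qed

lemma upper_tail_bound:
  assumes n: "n > 0" and d: "\<delta> > 0" and a0: "n + Re v > 0" and av: "Re v \<le> n * \<delta> / 2"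
  shows "norm (integral {n*(1+\<delta>)..} (ffun n v)) \<le>
           exp ((n + Re v) * ln (n*(1+\<delta>)) - n*(1+\<delta>)) / (\<delta> / (2*(1+\<delta>)))"
proof -
  define T where "T = n*(1+\<delta>)"
  define c where "c = \<delta> / (2*(1+\<delta>))"
  define a where "a = n + Re v"
  define K0 where "K0 = exp (a * ln T - T + c * T)"
  have T0: "T > 0" using n d by (simp add: T_def)
  have c0: "c > 0" using d by (simp add: c_def)
  have nvpos: "n + Re v > 0" by (rule a0)
  have i2: "ffun n v integrable_on {T..}" using gamma_split(1)[OF nvpos T0] .
  have hi: "((\<lambda>t. K0 * exp (- c * t)) has_integral (K0 * (exp (- c * T) / c))) {T..}"
    by (intro has_integral_mult_right has_integral_exp_minus_to_infinity c0)
  have aT: "a / T \<le> 1 - c"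
  proof -
    have "a \<le> n * (2 + \<delta>) / 2" using av by (simp add: a_def algebra_simps)
    also have "\<dots> = T * (1 - c)" using d by (simp add: T_def c_def field_simps)
    finally show ?thesis using T0 by (simp add: divide_le_eq mult.commute)
  qed
  have pt: "norm (ffun n v t) \<le> K0 * exp (- c * t)" if t: "t \<in> {T..}" for t
  proof -
    have tT: "t \<ge> T" using t by simp
    have t0: "t > 0" using tT T0 by linarith
    have "norm (ffun n v t) = t powr a / exp t"
      unfolding ffun_def using t0 by (simp add: norm_divide norm_powr_real_powr a_def)
    also have "\<dots> = exp (a * ln t - t)" using t0 by (simp add: powr_def exp_diff)
    also have "\<dots> \<le> exp (a * ln T - T + c * T - c * t)"
    proof -
      have "ln (t / T) \<le> t / T - 1" using t0 T0 by (intro ln_le_minus_one) simp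
      hence l: "ln t - ln T \<le> (t - T) / T" using t0 T0 by (simp add: ln_div diff_divide_distrib)
      have "a * (ln t - ln T) \<le> a * ((t - T) / T)" using l a0 by (intro mult_left_mono) (auto simp: a_def)
      also have "\<dots> = (a / T) * (t - T)" by simp
      also have "\<dots> \<le> (1 - c) * (t - T)" using aT tT by (intro mult_right_mono) auto
      finally show ?thesis by (simp add: algebra_simps)
    qed
    also have "\<dots> = K0 * exp (- c * t)" by (simp add: K0_def exp_add [symmetric] exp_diff)
    finally show ?thesis .
  qed
  have "norm (integral {T..} (ffun n v)) \<le> integral {T..} (\<lambda>t. K0 * exp (- c * t))"
    by (intro integral_norm_bound_integral i2 pt) (use hi in blast)
  also have "\<dots> = K0 * (exp (- c * T) / c)" using hi by (rule integral_unique)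
  also have "\<dots> = exp (a * ln T - T) / c" by (simp add: K0_def exp_add [symmetric])
  finally show ?thesis by (simp add: T_def c_def a_def)
qed

lemma ln_one_minus_strict:
  assumes "0 < d" "d < (1::real)"
  shows "ln (1 - d) < - d"
proof -
  have "1 - d < (1 - d/2)^2" using assms by (simp add: power2_eq_square algebra_simps)
  hence "ln (1 - d) < ln ((1 - d/2)^2)" using assms by (intro ln_less_cancel_iff[THEN iffD2]) auto
  also have "\<dots> = 2 * ln (1 - d/2)" using assms by (simp add: ln_realpow)
  also have "ln (1 - d/2) \<le> - (d/2)" using assms by (intro ln_one_minus_pos_upper_bound) auto
  hence "2 * ln (1 - d/2) \<le> - d" by simp
  finally show ?thesis .
qed

lemma lower_tail_bound:
  assumes n: "n > 0" and d: "\<delta> > 0" "\<delta> \<le> 1/2" and m: "n - cmod v > 0"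
  shows "norm (integral {0..1-\<delta>} (gfun n v)) \<le> exp (cmod v + (n - cmod v) * (\<delta> + ln (1 - \<delta>)))"
proof -
  define m where "m = n - cmod v"
  define B where "B = exp (cmod v + m * (\<delta> + ln (1 - \<delta>)))"
  have av: "n + Re v \<ge> m" using abs_Re_le_cmod[of v] by (simp add: m_def)
  have nvpos: "n + Re v > 0"
  proof -
    have "Re v > - n" using abs_Re_le_cmod[of v] m n by linarith
    thus ?thesis by simp
  qed
  have hi: "(gfun n v has_integral integral {0..1-\<delta>} (gfun n v)) (cbox 0 (1-\<delta>))"
    using integrable_continuous_interval[OF cont_gfun[OF nvpos]] by (simp add: cbox_interval has_integral_integral)
  have pt: "norm (gfun n v s) \<le> B" if s: "s \<in> cbox 0 (1-\<delta>)" for s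
  proof (cases "s = 0")
    case True
    then show ?thesis by (simp add: gfun_def B_def)
  next
    case False
    hence s0: "s > 0" "s \<le> 1 - \<delta>" using s by (auto simp: cbox_interval)
    have s1: "s \<le> 1" using s0 d by linarith
    have "norm (gfun n v s) = exp (n * (1 - s)) * s powr (n + Re v)"
      unfolding gfun_def using s0 by (simp add: norm_mult norm_powr_real_powr)
    also have "\<dots> \<le> exp (n * (1 - s)) * s powr m"
      using s0 s1 av by (intro mult_left_mono powr_mono') auto
    also have "\<dots> = exp (cmod v * (1 - s) + m * (1 - s + ln s))"
      using s0 by (simp add: powr_def exp_add [symmetric] m_def algebra_simps)
    also have "\<dots> \<le> B"
    proof -
      have "ln (s / (1 - \<delta>)) \<le> s / (1 - \<delta>) - 1" using s0 d by (intro ln_le_minus_one) auto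
      hence l1: "ln s - ln (1 - \<delta>) \<le> (s - (1 - \<delta>)) / (1 - \<delta>)"
        using s0 d by (simp add: ln_div diff_divide_distrib)
      have "(s - (1 - \<delta>)) / (1 - \<delta>) \<le> s - (1 - \<delta>)"
      proof -
        have "(s - (1 - \<delta>)) * 1 \<le> (s - (1 - \<delta>)) * (1 - \<delta>)"
          using s0 d by (intro mult_left_mono_neg) auto
        thus ?thesis using d by (simp add: divide_le_eq)
      qed
      with l1 have "1 - s + ln s \<le> \<delta> + ln (1 - \<delta>)" by linarith
      hence "m * (1 - s + ln s) \<le> m * (\<delta> + ln (1 - \<delta>))" using m by (intro mult_left_mono) (auto simp: m_def)
      moreover have "cmod v * (1 - s) \<le> cmod v" using s0 by (simp add: mult_left_le)
      ultimately show ?thesis by (simp add: B_def)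
    qed
    finally show ?thesis .
  qed
  have "norm (integral {0..1-\<delta>} (gfun n v)) \<le> B * Henstock_Kurzweil_Integration.content (cbox 0 (1-\<delta>))"
    by (rule has_integral_bound[OF _ hi pt]) (simp add: B_def)
  also have "\<dots> \<le> B * 1" using d by (intro mult_left_mono) (auto simp: B_def)
  finally show ?thesis by (simp add: B_def m_def)
qed

definition TT :: "real \<Rightarrow> complex \<Rightarrow> real \<Rightarrow> complex" where
  "TT n v \<delta> = of_real (exp n) / (2 * exp ((of_real n + v) * of_real (ln n))) * integral {n*(1+\<delta>)..} (ffun n v)"

lemma gfun_gp:
  assumes u: "1 + u > 0"
  shows "gfun n v (1 + u) = gp n v u"
proof -
  have h0': "complex_of_real (1 + u) \<noteq> 0" using u by (subst of_real_eq_0_iff) linarith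
  have h0: "(1::complex) + of_real u \<noteq> 0" using h0' by simp
  have hl: "Ln (1 + complex_of_real u) = of_real (ln (1+u))" using Ln_of_real[OF u] by simp
  show ?thesis unfolding gfun_def gp_def by (simp add: powr_def h0 hl)
qed

lemma theta_decomp:
  assumes n: "n > 0" and d: "\<delta> > 0" "\<delta> \<le> 1/2" and nv: "n + Re v > 0"
  shows "theta n v = 1 + of_real n / 2 * (integral {0..1-\<delta>} (gfun n v) +
            integral {0..\<delta>} (\<lambda>t. gp n v (-t) - gp n v t)) - TT n v \<delta>"
proof -
  define w where "w = of_real n + v"
  define X where "X = exp (w * of_real (ln n))"
  define T where "T = n * (1 + \<delta>)"
  define G0 where "G0 = integral {0..1-\<delta>} (gfun n v)"
  define G1 where "G1 = integral {1-\<delta>..1} (gfun n v)"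
  define G2 where "G2 = integral {1..1+\<delta>} (gfun n v)"
  have X: "X = of_real n powr w" using n by (simp add: X_def powr_def Ln_of_real)
  have X0: "X \<noteq> 0" by (simp add: X_def)
  have T0: "T > 0" using n d by (simp add: T_def)
  have int: "gfun n v integrable_on {0..1+\<delta>}"
    by (rule integrable_continuous_interval[OF cont_gfun[OF nv]])
  have int_sub: "gfun n v integrable_on {a..b}" if "0 \<le> a" "b \<le> 1+\<delta>" for a b
    using integrable_on_subinterval[OF int, of a b] that by (simp add: cbox_interval)
  have c1: "integral {0..1} (gfun n v) = G0 + G1"
    unfolding G0_def G1_def using d
    by (intro Henstock_Kurzweil_Integration.integral_combine[symmetric] int_sub) auto
  have c2: "integral {0..1+\<delta>} (gfun n v) = integral {0..1} (gfun n v) + G2"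
    unfolding G2_def using d
    by (intro Henstock_Kurzweil_Integration.integral_combine[symmetric] int) auto
  have thetaeq: "theta n v = 1 + of_real n * integral {0..1} (gfun n v) - of_real (exp n) / (2 * X) * Gamma (w + 1)"
    unfolding theta_def gfun_def X_def w_def by simp
  have gam: "Gamma (w + 1) = integral {0..T} (ffun n v) + integral {T..} (ffun n v)"
    using gamma_split(2)[OF nv T0] by (simp add: w_def)
  have cp: "integral {0..T} (ffun n v) = of_real n * X * of_real (exp (-n)) * integral {0..1+\<delta>} (gfun n v)"
    using compact_part[OF nv n, of "1+\<delta>"] d by (simp add: T_def X w_def)
  have e: "of_real (exp n) * of_real (exp (-n)) = (1::complex)"
    by (simp add: exp_minus flip: of_real_mult)
  have gamterm: "of_real (exp n) / (2 * X) * Gamma (w + 1) = of_real n / 2 * (G0 + G1 + G2) + TT n v \<delta>"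
  proof -
    have "of_real (exp n) / (2 * X) * Gamma (w + 1) =
          (of_real (exp n) * of_real (exp (-n))) * (X / X) * (of_real n / 2) * integral {0..1+\<delta>} (gfun n v)
          + of_real (exp n) / (2 * X) * integral {T..} (ffun n v)"
      unfolding gam cp by (simp add: field_simps)
    also have "\<dots> = of_real n / 2 * (G0 + G1 + G2) + TT n v \<delta>"
      using X0 unfolding e c2 c1 by (simp add: TT_def X_def w_def T_def)
    finally show ?thesis .
  qed
  have h1: "((\<lambda>t. gp n v (-t)) has_integral G1) {0..\<delta>}"
  proof -
    have "((\<lambda>t. gfun n v (1 - t)) has_integral G1) {0..\<delta>}"
      unfolding G1_def using d
      by (intro has_integral_reflect1 int_sub[unfolded has_integral_integral]) auto
    thus ?thesis
      by (rule has_integral_spike_finite[of "{}", rotated 2]) (use d in \<open>auto simp: gfun_gp[symmetric]\<close>)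
  qed
  have h2: "((\<lambda>t. gp n v t) has_integral G2) {0..\<delta>}"
  proof -
    have "((\<lambda>t. gfun n v (1 + t)) has_integral G2) {0..\<delta>}"
      unfolding G2_def using d
      by (intro has_integral_shift1 int_sub[unfolded has_integral_integral]) auto
    thus ?thesis
      by (rule has_integral_spike_finite[of "{}", rotated 2]) (use d in \<open>auto simp: gfun_gp[symmetric]\<close>)
  qed
  have Ieq: "integral {0..\<delta>} (\<lambda>t. gp n v (-t) - gp n v t) = G1 - G2"
    by (rule integral_unique[OF has_integral_diff[OF h1 h2]])
  show ?thesis
    unfolding thetaeq gamterm c1 G0_def[symmetric] Ieq by (simp add: field_simps)
qed

lemma expo_small:
  fixes \<beta> :: real
  assumes "\<beta> < 0"
  shows "eventually (\<lambda>n. n^p * exp (\<beta>*n) \<le> 1 / n^R) at_top"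
proof -
  define \<gamma> where "\<gamma> = - \<beta>"
  have g: "\<gamma> > 0" using assms by (simp add: \<gamma>_def)
  have f: "filterlim (\<lambda>x. \<gamma> * x) at_top at_top"
    by (rule filterlim_tendsto_pos_mult_at_top[OF tendsto_const g filterlim_ident])
  have L: "((\<lambda>x. (\<gamma> * x)^(p+R) / exp (\<gamma> * x)) \<longlongrightarrow> 0) at_top"
    by (rule filterlim_compose[OF tendsto_power_div_exp_0 f])
  have "eventually (\<lambda>x. (\<gamma> * x)^(p+R) / exp (\<gamma> * x) < \<gamma>^(p+R)) at_top"
    by (rule order_tendstoD(2)[OF L]) (use g in simp)
  moreover have "eventually (\<lambda>x::real. x > 0) at_top" by (rule eventually_gt_at_top)
  ultimately show ?thesis
  proof eventually_elim
    case (elim x)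
    have "(\<gamma> * x)^(p+R) / exp (\<gamma> * x) = \<gamma>^(p+R) * (x^(p+R) * exp (\<beta> * x))"
    proof -
      have "(\<gamma> * x)^(p+R) = \<gamma>^(p+R) * x^(p+R)" by (rule power_mult_distrib)
      moreover have "exp (\<gamma> * x) = inverse (exp (\<beta> * x))" by (simp add: \<gamma>_def exp_minus)
      ultimately show ?thesis by (simp add: divide_inverse)
    qed
    with elim(1) have "\<gamma>^(p+R) * (x^(p+R) * exp (\<beta> * x)) < \<gamma>^(p+R) * 1" by simp
    hence "x^(p+R) * exp (\<beta> * x) < 1" using g by (subst (asm) mult_less_cancel_left_pos) auto
    hence "x^R * (x^p * exp (\<beta> * x)) < 1" by (simp add: power_add algebra_simps)
    thus ?case using elim(2) by (simp add: field_simps)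
  qed
qed

lemma bigo_from_bound:
  fixes f :: "real \<Rightarrow> complex"
  assumes "eventually (\<lambda>n. norm (f n) \<le> B / n^R) at_top"
  shows "f \<in> O[at_top](\<lambda>n. 1 / (of_real n)^R)"
proof (rule bigoI)
  show "eventually (\<lambda>n. norm (f n) \<le> B * norm (1 / (of_real n :: complex)^R)) at_top"
    using assms eventually_gt_at_top[of 0]
  proof eventually_elim
    case (elim n)
    thus ?case by (simp add: norm_divide norm_power)
  qed
qed

lemma cont_gp:
  assumes "\<delta> < 1" and that: "\<bar>s\<bar> = 1"
  shows "continuous_on {0..\<delta>} (\<lambda>t. gp n v (s * t))"
proof -
  have "\<forall>t\<in>{0..\<delta>}. 1 + s * t > 0"
  proof
    fix t assume t: "t \<in> {0..\<delta>}"
    have "\<bar>s * t\<bar> \<le> \<delta>" using t that by (simp add: abs_mult)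
    thus "1 + s * t > 0" using assms by linarith
  qed
  thus ?thesis unfolding gp_def
    by (intro continuous_intros) auto
qed

lemma cont_Aap: "continuous_on S (\<lambda>t. Aap K n v (s * t))"
  unfolding Aap_def Pk_def by (intro continuous_intros) auto

lemma err_integral:
  fixes v :: complex
  assumes M: "M \<ge> 1" and d: "\<delta> > 0" "\<delta> \<le> 1/2" and n: "n \<ge> 1"
    and hC: "\<forall>n\<ge>1. \<forall>u. \<bar>u\<bar> \<le> \<delta> \<longrightarrow> norm (gp n v u - Aap (2*M) n v u) \<le> C * n^(2*M) * \<bar>u\<bar>^(3*(2*M)) * exp (-n*u^2/4)"
  shows "norm (of_real n / 2 * (integral {0..\<delta>} (\<lambda>t. gp n v (-t) - gp n v t) -
                integral {0..\<delta>} (\<lambda>t. Aap (2*M) n v (-t) - Aap (2*M) n v t)))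
           \<le> \<bar>C\<bar> * fact (3*M-1) * 4^(3*M) / 2 / n^(M-1)"
proof -
  define K where "K = 2*M"
  define j where "j = 3*M - 1"
  have jK: "2*j+1 = 3*K - 1" "j + 1 = 3*M" using M by (simp_all add: j_def K_def)
  define E where "E = (\<lambda>t. (gp n v (-t) - Aap K n v (-t)) - (gp n v t - Aap K n v t))"
  have d1: "\<delta> < 1" using d by simp
  have c1: "continuous_on {0..\<delta>} (\<lambda>t. gp n v (-t))" using cont_gp[OF d1, of "-1"] by simp
  have c2: "continuous_on {0..\<delta>} (\<lambda>t. gp n v t)" using cont_gp[OF d1, of 1] by simp
  have c3: "continuous_on {0..\<delta>} (\<lambda>t. Aap K n v (-t))" using cont_Aap[of _ K n v "-1"] by simp
  have c4: "continuous_on {0..\<delta>} (\<lambda>t. Aap K n v t)" using cont_Aap[of _ K n v 1] by simp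
  have i1: "(\<lambda>t. gp n v (-t) - gp n v t) integrable_on {0..\<delta>}"
    by (intro integrable_continuous_interval continuous_on_diff c1 c2)
  have i2: "(\<lambda>t. Aap K n v (-t) - Aap K n v t) integrable_on {0..\<delta>}"
    by (intro integrable_continuous_interval continuous_on_diff c3 c4)
  have iE: "E integrable_on {0..\<delta>}"
    unfolding E_def by (intro integrable_continuous_interval continuous_on_diff c1 c2 c3 c4)
  have eqI: "integral {0..\<delta>} (\<lambda>t. gp n v (-t) - gp n v t) - integral {0..\<delta>} (\<lambda>t. Aap K n v (-t) - Aap K n v t)
        = integral {0..\<delta>} E"
    unfolding E_def using integral_diff[OF i1 i2] by (simp add: algebra_simps)
  define h where "h = (\<lambda>t::real. 2 * \<bar>C\<bar> * n^K * (t^(2*j+1) * exp (-(n/4)*t^2)))"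
  have ih: "(\<lambda>t. t^(2*j+1) * exp (-(n/4)*t^2)) integrable_on {0..\<delta>}"
    by (intro integrable_continuous_interval continuous_intros)
  have ih2: "h integrable_on {0..\<delta>}" unfolding h_def by (intro integrable_continuous_interval continuous_intros)
  have pt: "norm (E t) \<le> h t" if t: "t \<in> {0..\<delta>}" for t
  proof -
    have t0: "0 \<le> t" "t \<le> \<delta>" using t by auto
    have t1: "t \<le> 1" using t0 d by linarith
    have pw: "t^(3*K) \<le> t^(2*j+1)"
    proof -
      have e: "3*K = Suc (2*j+1)" using M by (simp add: K_def j_def)
      have "t^(3*K) = t^(2*j+1) * t" unfolding e by (simp add: mult.commute)
      also have "\<dots> \<le> t^(2*j+1) * 1" using t0 t1 by (intro mult_left_mono) auto
      finally show ?thesis by simp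
    qed
    have b: "norm (gp n v u - Aap K n v u) \<le> \<bar>C\<bar> * n^K * (t^(2*j+1) * exp (-(n/4)*t^2))" if u: "\<bar>u\<bar> = t" for u
    proof -
      have "norm (gp n v u - Aap K n v u) \<le> C * n^K * \<bar>u\<bar>^(3*K) * exp (-n*u^2/4)"
        using hC n u t0 by (auto simp: K_def)
      also have "\<dots> \<le> \<bar>C\<bar> * n^K * \<bar>u\<bar>^(3*K) * exp (-n*u^2/4)"
        using n by (intro mult_right_mono) auto
      also have "\<dots> = \<bar>C\<bar> * n^K * (t^(3*K) * exp (-(n/4)*t^2))"
      proof -
        have u2: "u^2 = t^2" using u by (metis power2_abs)
        have ex: "exp (-n*u^2/4) = exp (-(n/4)*t^2)" using u2 by simp
        show ?thesis by (simp add: u ex mult.assoc u2)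
      qed
      also have "\<dots> \<le> \<bar>C\<bar> * n^K * (t^(2*j+1) * exp (-(n/4)*t^2))"
        using pw n by (intro mult_left_mono mult_right_mono) auto
      finally show ?thesis .
    qed
    have "norm (E t) \<le> norm (gp n v (-t) - Aap K n v (-t)) + norm (gp n v t - Aap K n v t)"
      unfolding E_def by (rule norm_triangle_ineq4)
    also have "\<dots> \<le> \<bar>C\<bar> * n^K * (t^(2*j+1) * exp (-(n/4)*t^2)) + \<bar>C\<bar> * n^K * (t^(2*j+1) * exp (-(n/4)*t^2))"
      using t0 by (intro add_mono b) auto
    also have "\<dots> = h t" by (simp add: h_def)
    finally show ?thesis .
  qed
  have "norm (integral {0..\<delta>} E) \<le> integral {0..\<delta>} h"
    by (rule integral_norm_bound_integral[OF iE ih2 pt])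
  also have "integral {0..\<delta>} h = 2 * \<bar>C\<bar> * n^K * integral {0..\<delta>} (\<lambda>t. t^(2*j+1) * exp (-(n/4)*t^2))"
    unfolding h_def by (simp add: integral_mult_right)
  also have "\<dots> \<le> 2 * \<bar>C\<bar> * n^K * (fact j / (2 * (n/4)^(j+1)))"
    using n d by (intro mult_left_mono gauss_odd_integral_le) auto
  finally have bnd: "norm (integral {0..\<delta>} E) \<le> 2 * \<bar>C\<bar> * n^K * (fact j / (2 * (n/4)^(j+1)))" .
  have "norm (of_real n / 2 * integral {0..\<delta>} E) = n / 2 * norm (integral {0..\<delta>} E)"
    using n by (simp add: norm_mult)
  also have "\<dots> \<le> n / 2 * (2 * \<bar>C\<bar> * n^K * (fact j / (2 * (n/4)^(j+1))))"
    using n by (intro mult_left_mono bnd) auto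
  also have "\<dots> = \<bar>C\<bar> * fact (3*M-1) * 4^(3*M) / 2 / n^(M-1)"
  proof -
    have p: "n^K * n = n^(j+1) / n^(M-1)"
    proof -
      have "j + 1 = (K + 1) + (M - 1)" using M by (simp add: j_def K_def)
      hence "n^(j+1) = n^(K+1) * n^(M-1)" by (simp add: power_add)
      thus ?thesis using n by simp
    qed
    have "n / 2 * (2 * \<bar>C\<bar> * n^K * (fact j / (2 * (n/4)^(j+1)))) = \<bar>C\<bar> * fact j * 4^(j+1) / 2 * ((n^K * n) / n^(j+1))"
      using n by (simp add: power_divide field_simps)
    also have "\<dots> = \<bar>C\<bar> * fact j * 4^(j+1) / 2 / n^(M-1)"
      unfolding p using n by (simp add: field_simps)
    also have "\<dots> = \<bar>C\<bar> * fact (3*M-1) * 4^(3*M) / 2 / n^(M-1)"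
    proof -
      have e4: "(4::real)^(3*M-1+1) = 4^(3*M)" using M by simp
      show ?thesis by (simp only: j_def e4)
    qed
    finally show ?thesis .
  qed
  finally have fin: "norm (of_real n / 2 * integral {0..\<delta>} E) \<le> \<bar>C\<bar> * fact (3*M-1) * 4^(3*M) / 2 / n^(M-1)" .
  show ?thesis unfolding eqI[unfolded K_def] by (rule fin)
qed

lemma sum_lessThan_add_split: "(\<Sum>j<k+R. f j) = (\<Sum>j<k. f j) + (\<Sum>r<R. f (k + r))"
  for f :: "nat \<Rightarrow> 'a::comm_monoid_add"
  by (induction R) (simp_all add: algebra_simps)

lemma S1_split:
  fixes n :: real
  assumes n: "n > 0" and M: "M = R + 1"
  shows "(\<Sum>k<2*M. \<Sum>j<3*M. cc v k j * of_real (n^k / n^j)) =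
         (\<Sum>r<R. (\<Sum>k<2*M. cc v k (k+r)) / of_real n^r) +
         (\<Sum>k<2*M. \<Sum>j<3*M. if k + R \<le> j then cc v k j * of_real (n^k / n^j) else 0)"
proof -
  define f where "f = (\<lambda>k j. cc v k j * (of_real (n^k / n^j) :: complex))"
  have inner: "(\<Sum>j<3*M. f k j) = (\<Sum>r<R. cc v k (k+r) / of_real n^r) +
                 (\<Sum>j<3*M. if k + R \<le> j then f k j else 0)" if k: "k < 2*M" for k
  proof -
    have "(\<Sum>j<3*M. f k j) = (\<Sum>j<3*M. (if j < k + R then f k j else 0) + (if k + R \<le> j then f k j else 0))"
      by (intro sum.cong refl) auto
    also have "\<dots> = (\<Sum>j<3*M. if j < k + R then f k j else 0) + (\<Sum>j<3*M. if k + R \<le> j then f k j else 0)"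
      by (rule sum.distrib)
    also have "(\<Sum>j<3*M. if j < k + R then f k j else 0) = (\<Sum>j\<in>{..<3*M} \<inter> {..<k+R}. f k j)"
      by (subst sum.inter_restrict) auto
    also have "{..<3*M} \<inter> {..<k+R} = {..<k+R}" using k M by auto
    also have "(\<Sum>j<k+R. f k j) = (\<Sum>j<k. f k j) + (\<Sum>r<R. f k (k + r))"
      by (rule sum_lessThan_add_split)
    also have "(\<Sum>j<k. f k j) = 0" by (intro sum.neutral) (auto simp: f_def cc_low)
    also have "(\<Sum>r<R. f k (k + r)) = (\<Sum>r<R. cc v k (k+r) / of_real n^r)"
    proof (intro sum.cong refl)
      fix r
      have h: "n^k / n^(k+r) = 1 / n^r" using n by (simp add: power_add)
      show "f k (k + r) = cc v k (k+r) / of_real n^r" unfolding f_def h by (simp add: divide_inverse)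
    qed
    finally show ?thesis by simp
  qed
  have "(\<Sum>k<2*M. \<Sum>j<3*M. f k j) = (\<Sum>k<2*M. (\<Sum>r<R. cc v k (k+r) / of_real n^r) +
                 (\<Sum>j<3*M. if k + R \<le> j then f k j else 0))"
    by (intro sum.cong refl inner) auto
  also have "\<dots> = (\<Sum>k<2*M. \<Sum>r<R. cc v k (k+r) / of_real n^r) + (\<Sum>k<2*M. \<Sum>j<3*M. if k + R \<le> j then f k j else 0)"
    by (rule sum.distrib)
  also have "(\<Sum>k<2*M. \<Sum>r<R. cc v k (k+r) / of_real n^r) = (\<Sum>r<R. (\<Sum>k<2*M. cc v k (k+r)) / of_real n^r)"
    by (subst sum.swap) (simp add: sum_divide_distrib)
  finally show ?thesis by (simp only: f_def)
qed

lemma rho_sum: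
  fixes n :: real
  assumes R: "R \<ge> 1" and M: "M = R + 1"
  shows "(\<Sum>r<R. rho r v / (of_real n)^r) = 1 - (\<Sum>r<R. (\<Sum>k<2*M. cc v k (k+r)) / of_real n^r)"
proof -
  have "(\<Sum>r<R. rho r v / (of_real n)^r) =
        (\<Sum>r<R. ((if r = 0 then 1 else 0) - (\<Sum>k<2*M. cc v k (k+r))) / of_real n^r)"
  proof (intro sum.cong refl)
    fix r assume "r \<in> {..<R}"
    hence "2*r+2 \<le> 2*M" using M by auto
    thus "rho r v / (of_real n)^r = ((if r = 0 then 1 else 0) - (\<Sum>k<2*M. cc v k (k+r))) / of_real n^r"
      using rho_eq[of r "2*M" v] by simp
  qed
  also have "\<dots> = (\<Sum>r<R. (if r = 0 then 1 else 0) / of_real n^r) - (\<Sum>r<R. (\<Sum>k<2*M. cc v k (k+r)) / of_real n^r)"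
    by (simp add: diff_divide_distrib sum_subtractf)
  also have "(\<Sum>r<R. (if r = 0 then 1 else 0) / (of_real n :: complex)^r) = 1"
  proof -
    have "(\<Sum>r<R. (if r = 0 then 1 else 0) / (of_real n :: complex)^r) = (\<Sum>r<R. if r = 0 then 1 else 0)"
      by (intro sum.cong refl) auto
    also have "\<dots> = 1" using R by simp
    finally show ?thesis .
  qed
  finally show ?thesis .
qed

lemma Eg_bound:
  assumes n: "n \<ge> 1" and d: "0 \<le> \<delta>" "\<delta> \<le> 1"
  shows "Eg (n/2) j \<delta> \<le> (real j + 1) * n^j * exp (-(\<delta>^2/2) * n)"
proof -
  have "(\<Sum>i\<le>j. (n/2)^i * \<delta>^(2*i) / fact i) \<le> (\<Sum>i\<le>j. n^j)"
  proof (intro sum_mono)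
    fix i assume i: "i \<in> {..j}"
    have "(n/2)^i * \<delta>^(2*i) / fact i \<le> (n/2)^i * \<delta>^(2*i)"
      using n d by (intro div_fact_le) auto
    also have "\<dots> \<le> n^i * 1"
      using n d by (intro mult_mono power_mono) (auto intro: power_le_one)
    also have "\<dots> \<le> n^j" using n i by (simp add: power_increasing)
    finally show "(n/2)^i * \<delta>^(2*i) / fact i \<le> n^j" .
  qed
  also have "\<dots> = (real j + 1) * n^j" by simp
  finally have s: "(\<Sum>i\<le>j. (n/2)^i * \<delta>^(2*i) / fact i) \<le> (real j + 1) * n^j" .
  have "Eg (n/2) j \<delta> = exp (-(\<delta>^2/2) * n) * (\<Sum>i\<le>j. (n/2)^i * \<delta>^(2*i) / fact i)"
    by (simp add: Eg_def algebra_simps)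
  also have "\<dots> \<le> exp (-(\<delta>^2/2) * n) * ((real j + 1) * n^j)"
    by (intro mult_left_mono s) auto
  finally show ?thesis by (simp add: algebra_simps)
qed

theorem theorem4p2:
  fixes v :: complex and R :: nat
  assumes "R \<ge> 1"
  shows "(\<lambda>n::real. theta n v - (\<Sum>r<R. rho r v / (of_real n) ^ r))
           \<in> O[at_top](\<lambda>n. 1 / (of_real n) ^ R)"
proof -
  define M where "M = R + 1"
  have M1: "M \<ge> 1" by (simp add: M_def)
  obtain \<delta> where \<delta>: "\<delta> > 0" "\<delta> \<le> 1/2" and
    "\<exists>C. \<forall>n\<ge>1. \<forall>u. \<bar>u\<bar> \<le> \<delta> \<longrightarrow> norm (gp n v u - Aap (2*M) n v u) \<le> C * n^(2*M) * \<bar>u\<bar>^(3*(2*M)) * exp (-n*u^2/4)"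
    using approx_bound[of "2*M" v] M1 by auto
  then obtain C where hC: "\<forall>n\<ge>1. \<forall>u. \<bar>u\<bar> \<le> \<delta> \<longrightarrow> norm (gp n v u - Aap (2*M) n v u) \<le> C * n^(2*M) * \<bar>u\<bar>^(3*(2*M)) * exp (-n*u^2/4)"
    by blast
  define \<beta>1 where "\<beta>1 = \<delta> + ln (1 - \<delta>)"
  define \<beta>2 where "\<beta>2 = ln (1 + \<delta>) - \<delta>"
  define \<beta>3 where "\<beta>3 = -(\<delta>^2/2)"
  define c' where "c' = \<delta> / (2*(1+\<delta>))"
  define A1 where "A1 = exp (cmod v - cmod v * \<beta>1) / 2"
  define A2 where "A2 = \<bar>C\<bar> * fact (3*M-1) * 4^(3*M) / 2"
  define A3 where "A3 = (\<Sum>k<2*M. \<Sum>j<3*M. norm (cc v k j))"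
  define A4 where "A4 = (\<Sum>k<2*M. \<Sum>j<3*M. norm (cc v k j) * (real j + 1))"
  define A5 where "A5 = exp (Re v * ln (1+\<delta>)) / (2*c')"
  have b1neg: "\<beta>1 < 0" using ln_one_minus_strict[of \<delta>] \<delta> by (simp add: \<beta>1_def)
  have b2neg: "\<beta>2 < 0" using ln_add_one_self_less_self[of \<delta>] \<delta> by (simp add: \<beta>2_def)
  have b3neg: "\<beta>3 < 0" using \<delta> by (simp add: \<beta>3_def)
  show ?thesis
  proof (rule bigo_from_bound[where B = "A1 + A2 + A3 + A4 + A5"])
    have ev1: "eventually (\<lambda>n. n^1 * exp (\<beta>1*n) \<le> 1/n^R) at_top" by (rule expo_small[OF b1neg])
    have ev2: "eventually (\<lambda>n. n^(2*M + 3*M) * exp (\<beta>3*n) \<le> 1/n^R) at_top" by (rule expo_small[OF b3neg])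
    have ev3: "eventually (\<lambda>n. n^0 * exp (\<beta>2*n) \<le> 1/n^R) at_top" by (rule expo_small[OF b2neg])
    have ev4: "eventually (\<lambda>n. n \<ge> 1 + cmod v + 2 * cmod v / \<delta>) at_top" by (rule eventually_ge_at_top)
    show "eventually (\<lambda>n. norm (theta n v - (\<Sum>r<R. rho r v / (of_real n) ^ r)) \<le> (A1 + A2 + A3 + A4 + A5) / n^R) at_top"
      using ev1 ev2 ev3 ev4
    proof eventually_elim
      case (elim n)
      have n1: "n \<ge> 1" using elim(4) \<delta> by (smt (verit) divide_nonneg_pos norm_ge_zero)
      have n0: "n > 0" using n1 by simp
      have nv: "n - cmod v > 0" using elim(4) \<delta> by (smt (verit) divide_nonneg_pos norm_ge_zero)
      have nvr: "n + Re v > 0" using nv abs_Re_le_cmod[of v] by linarith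
      have rv: "Re v \<le> n * \<delta> / 2"
      proof -
        have "2 * cmod v / \<delta> \<le> n" using elim(4) by (smt (verit) norm_ge_zero)
        hence "2 * cmod v \<le> n * \<delta>" using \<delta> by (simp add: divide_le_eq)
        thus ?thesis using abs_Re_le_cmod[of v] by linarith
      qed
      define G0 where "G0 = integral {0..1-\<delta>} (gfun n v)"
      define IM where "IM = integral {0..\<delta>} (\<lambda>t. gp n v (-t) - gp n v t)"
      define IA where "IA = integral {0..\<delta>} (\<lambda>t. Aap (2*M) n v (-t) - Aap (2*M) n v t)"
      define S1 where "S1 = (\<Sum>k<2*M. \<Sum>j<3*M. cc v k j * of_real (n^k / n^j))"
      define S2 where "S2 = (\<Sum>k<2*M. \<Sum>j<3*M. cc v k j * of_real (n^k / n^j) * of_real (Eg (n/2) j \<delta>))"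
      define S3 where "S3 = (\<Sum>k<2*M. \<Sum>j<3*M. if k + R \<le> j then cc v k j * of_real (n^k / n^j) else 0)"
      define Q where "Q = (\<Sum>r<R. (\<Sum>k<2*M. cc v k (k+r)) / of_real n^r)"
      have th: "theta n v = 1 + of_real n / 2 * (G0 + IM) - TT n v \<delta>"
        unfolding G0_def IM_def by (rule theta_decomp[OF n0 \<delta> nvr])
      have ia: "IA = - (2 / of_real n) * (S1 - S2)"
      proof -
        have "IA = - (2 / of_real n) * (\<Sum>k<2*M. \<Sum>j<3*M. cc v k j * of_real (n^k / n^j) * of_real (1 - Eg (n/2) j \<delta>))"
          unfolding IA_def using \<delta> by (intro integral_unique main_integral n0) auto
        also have "(\<Sum>k<2*M. \<Sum>j<3*M. cc v k j * of_real (n^k / n^j) * of_real (1 - Eg (n/2) j \<delta>)) = S1 - S2"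
          unfolding S1_def S2_def sum_subtractf[symmetric]
          by (intro sum.cong refl) (simp add: algebra_simps diff_divide_distrib)
        finally show ?thesis .
      qed
      have s1: "S1 = Q + S3" unfolding S1_def Q_def S3_def by (rule S1_split[OF n0 M_def])
      have rs: "(\<Sum>r<R. rho r v / (of_real n)^r) = 1 - Q" unfolding Q_def by (rule rho_sum[OF assms M_def])
      have eq: "theta n v - (\<Sum>r<R. rho r v / (of_real n)^r) =
                 of_real n / 2 * G0 + of_real n / 2 * (IM - IA) - S3 + S2 - TT n v \<delta>"
      proof -
        have h: "of_real n / 2 * IA = - (S1 - S2)" using n0 unfolding ia by (simp add: field_simps)
        have d1: "of_real n / 2 * (G0 + IM) = of_real n / 2 * G0 + of_real n / 2 * IM" by (simp add: distrib_left)
        have d2: "of_real n / 2 * (IM - IA) = of_real n / 2 * IM - of_real n / 2 * IA" by (simp add: right_diff_distrib)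
        show ?thesis unfolding th rs d1 d2 h s1 by (simp add: algebra_simps)
      qed
      have b1: "norm (of_real n / 2 * G0) \<le> A1 / n^R"
      proof -
        have "norm (of_real n / 2 * G0) = n / 2 * norm G0" using n0 by (simp add: norm_mult)
        also have "\<dots> \<le> n / 2 * exp (cmod v + (n - cmod v) * (\<delta> + ln (1 - \<delta>)))"
          unfolding G0_def using n0 \<delta> nv by (intro mult_left_mono lower_tail_bound) auto
        also have "\<dots> = A1 * (n^1 * exp (\<beta>1 * n))"
          by (simp add: A1_def \<beta>1_def exp_add [symmetric] algebra_simps)
        also have "\<dots> \<le> A1 * (1 / n^R)" using elim(1) by (intro mult_left_mono) (auto simp: A1_def)
        finally show ?thesis by simp
      qed
      have b2: "norm (of_real n / 2 * (IM - IA)) \<le> A2 / n^R"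
      proof -
        have "norm (of_real n / 2 * (IM - IA)) \<le> \<bar>C\<bar> * fact (3*M-1) * 4^(3*M) / 2 / n^(M-1)"
          unfolding IM_def IA_def by (rule err_integral[OF M1 \<delta> n1 hC])
        thus ?thesis by (simp add: A2_def M_def)
      qed
      have b3: "norm S3 \<le> A3 / n^R"
      proof -
        have "norm S3 \<le> (\<Sum>k<2*M. \<Sum>j<3*M. norm (cc v k j) / n^R)"
          unfolding S3_def
        proof (rule order_trans[OF norm_sum], rule sum_mono)
          fix k j
          show "norm (\<Sum>j<3*M. if k + R \<le> j then cc v k j * of_real (n^k / n^j) else 0) \<le>
                (\<Sum>j<3*M. norm (cc v k j) / n^R)"
          proof (rule order_trans[OF norm_sum], rule sum_mono)
            fix j
            show "norm (if k + R \<le> j then cc v k j * of_real (n^k / n^j) else 0) \<le> norm (cc v k j) / n^R"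
            proof (cases "k + R \<le> j")
              case True
              have "n^k / n^j = 1 / n^(j-k)"
                using True n0 by (simp add: power_diff)
              also have "\<dots> \<le> 1 / n^R"
                using True n1 by (intro divide_left_mono power_increasing) auto
              finally have le: "n^k / n^j \<le> 1 / n^R" .
              have ab: "\<bar>n^k / n^j\<bar> = n^k / n^j" using n0 by simp
              have "norm (cc v k j * of_real (n^k / n^j)) = norm (cc v k j) * (n^k / n^j)"
                by (simp only: norm_mult norm_of_real ab)
              also have "\<dots> \<le> norm (cc v k j) * (1 / n^R)" by (intro mult_left_mono le) auto
              finally show ?thesis using True by simp
            qed (use n0 in simp)
          qed
        qed
        also have "\<dots> = A3 / n^R" by (simp add: A3_def sum_divide_distrib)
        finally show ?thesis .
      qed
      have b4: "norm S2 \<le> A4 / n^R"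
      proof -
        have "norm S2 \<le> (\<Sum>k<2*M. \<Sum>j<3*M. norm (cc v k j) * (real j + 1) / n^R)"
          unfolding S2_def
        proof (rule order_trans[OF norm_sum], rule sum_mono)
          fix k assume k: "k \<in> {..<2*M}"
          show "norm (\<Sum>j<3*M. cc v k j * of_real (n^k / n^j) * of_real (Eg (n/2) j \<delta>)) \<le>
                (\<Sum>j<3*M. norm (cc v k j) * (real j + 1) / n^R)"
          proof (rule order_trans[OF norm_sum], rule sum_mono)
            fix j assume j: "j \<in> {..<3*M}"
            have E0: "0 \<le> Eg (n/2) j \<delta>" using n0 by (intro Eg_bounds) auto
            have Eb: "Eg (n/2) j \<delta> \<le> (real j + 1) * n^j * exp (\<beta>3 * n)"
              using Eg_bound[OF n1, of \<delta> j] \<delta> by (simp add: \<beta>3_def)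
            have "norm (cc v k j * of_real (n^k / n^j) * of_real (Eg (n/2) j \<delta>))
                  = norm (cc v k j) * (n^k / n^j) * Eg (n/2) j \<delta>"
            proof -
              have ab: "\<bar>n^k / n^j\<bar> = n^k / n^j" using n0 by simp
              have abE: "\<bar>Eg (n/2) j \<delta>\<bar> = Eg (n/2) j \<delta>" using E0 by simp
              show ?thesis by (simp only: norm_mult norm_of_real ab abE)
            qed
            also have "\<dots> \<le> norm (cc v k j) * (n^k / n^j) * ((real j + 1) * n^j * exp (\<beta>3 * n))"
              using n0 by (intro mult_left_mono Eb) auto
            also have "\<dots> = norm (cc v k j) * (real j + 1) * (n^k * exp (\<beta>3 * n))"
              using n0 by (simp add: field_simps)
            also have "\<dots> \<le> norm (cc v k j) * (real j + 1) * (n^(2*M + 3*M) * exp (\<beta>3 * n))"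
              using n1 k by (intro mult_left_mono mult_right_mono power_increasing) auto
            also have "\<dots> \<le> norm (cc v k j) * (real j + 1) * (1 / n^R)"
              using elim(2) by (intro mult_left_mono) auto
            finally show "norm (cc v k j * of_real (n^k / n^j) * of_real (Eg (n/2) j \<delta>)) \<le>
                norm (cc v k j) * (real j + 1) / n^R" by simp
          qed
        qed
        also have "\<dots> = A4 / n^R" by (simp add: A4_def sum_divide_distrib)
        finally show ?thesis .
      qed
      have b5: "norm (TT n v \<delta>) \<le> A5 / n^R"
      proof -
        have nX: "norm (exp ((of_real n + v) * of_real (ln n))) = exp ((n + Re v) * ln n)"
          by simp
        have tb: "norm (integral {n*(1+\<delta>)..} (ffun n v)) \<le> exp ((n + Re v) * ln (n*(1+\<delta>)) - n*(1+\<delta>)) / c'"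
          unfolding c'_def by (rule upper_tail_bound[OF n0 \<delta>(1) nvr rv])
        have "norm (TT n v \<delta>) = exp n / (2 * exp ((n + Re v) * ln n)) * norm (integral {n*(1+\<delta>)..} (ffun n v))"
          unfolding TT_def by (simp add: norm_mult norm_divide nX)
        also have "\<dots> \<le> exp n / (2 * exp ((n + Re v) * ln n)) * (exp ((n + Re v) * ln (n*(1+\<delta>)) - n*(1+\<delta>)) / c')"
          by (intro mult_left_mono tb) auto
        also have "\<dots> = A5 * (n^0 * exp (\<beta>2 * n))"
        proof -
          have "ln (n*(1+\<delta>)) = ln n + ln (1+\<delta>)" using n0 \<delta> by (simp add: ln_mult)
          hence "exp n / (2 * exp ((n + Re v) * ln n)) * (exp ((n + Re v) * ln (n*(1+\<delta>)) - n*(1+\<delta>)) / c')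
                 = exp (n - (n + Re v) * ln n + ((n + Re v) * ln (n*(1+\<delta>)) - n*(1+\<delta>))) / (2 * c')"
            by (simp add: exp_add exp_diff field_simps)
          also have "n - (n + Re v) * ln n + ((n + Re v) * ln (n*(1+\<delta>)) - n*(1+\<delta>)) = Re v * ln (1+\<delta>) + \<beta>2 * n"
            using \<open>ln (n*(1+\<delta>)) = ln n + ln (1+\<delta>)\<close> by (simp add: \<beta>2_def algebra_simps)
          finally show ?thesis by (simp add: A5_def exp_add)
        qed
        also have "\<dots> \<le> A5 * (1 / n^R)" using elim(3) \<delta> by (intro mult_left_mono) (auto simp: A5_def c'_def)
        finally show ?thesis by simp
      qed
      have "norm (theta n v - (\<Sum>r<R. rho r v / (of_real n)^r)) \<le>
             norm (of_real n / 2 * G0) + norm (of_real n / 2 * (IM - IA)) + norm S3 + norm S2 + norm (TT n v \<delta>)"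
        unfolding eq by (intro order_trans[OF norm_triangle_ineq4] add_mono order_trans[OF norm_triangle_ineq] order_refl
                              order_trans[OF norm_triangle_ineq4]) 
      also have "\<dots> \<le> A1 / n^R + A2 / n^R + A3 / n^R + A4 / n^R + A5 / n^R"
        by (intro add_mono b1 b2 b3 b4 b5)
      finally show ?case by (simp add: add_divide_distrib)
    qed
  qed
qed

end
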